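(* Let $d\ge1$, let $B$ be the open unit ball of $\mathbb C^d$, and let $\mathcal H$ be a regular Hilbert space of holomorphic functions on $B$ with kernel $k$. Assume that for all distinct $\lambda_1,\lambda_2\in B$ and all $z_1,z_2\in\mathbb C$: there exists a holomorphic $\varphi:B\to\mathbb C$ with $\sup_B|\varphi|\le1$ and $\varphi(\lambda_i)=z_i$ ($i=1,2$) if and only if the $2\times2$ matrix $[(1-z_j\bar z_i)k_{\lambda_i}(\lambda_j)]_{i,j=1}^2$ is positive semidefinite. Then there is a nonvanishing holomorphic function $f$ on $B$ with $k_\lambda(\mu)=\overline{f(\lambda)}f(\mu)(1-\langle\mu,\lambda\rangle)^{-1}$ for all $\lambda,\mu\in B$. Consequently the coordinate multiplication tuple on $\mathcal H$ is unitarily equivalent to that on the space with kernel $(1-\langle\mu,\lambda\rangle)^{-1}$, and for all $m,n$, $\lambda_1,\dots,\lambda_n\in B$ and $z_1,\dots,z_n\in\mathcal M_m(\mathbb C)$, the block matrix $[(1-z_jz_i^* )k_{\lambda_i}(\lambda_j)]$ is positive semidefinite iff $\left[\frac{1-z_jz_i^*}{1-\langle\lambda_j,\lambda_i\rangle}\right]$ is positive semidefinite.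
   Context: $\langle\mu,\lambda\rangle=\sum_r\mu^r\bar\lambda^r$. Regular space: $\mathcal H$ a Hilbert space of holomorphic functions on $B$ with reproducing kernel $k_\lambda(\mu)$ ($\langle f,k_\lambda\rangle=f(\lambda)$), such that the coordinate multiplications $M^r$ are bounded, $M=(M^1,\dots,M^d)$ has Taylor spectrum in $\mathrm{cl}(B)$ and essential Taylor spectrum in $\partial B$, and $\dim\bigcap_r\ker(\lambda^r-M^r)^*=1$ for all $\lambda\in B$. Positive semidefiniteness of a block matrix $[A_{ij}]$ with $A_{ij}\in\mathcal M_m(\mathbb C)$ means $\sum_{i,j}\langle A_{ij}a_i,a_j\rangle\ge0$ for all $a_i\in\mathbb C^m$. *)

theory Defs
  imports "HOL-Analysis.Analysis"
begin

(* Functions on C^d; elements of the Hilbert space are functions on C^d that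
   vanish outside the open unit ball B = ball 0 1 (norm of (complex, 'd) vec is the
   Euclidean norm). *)
type_synonym 'd hfun = "(complex, 'd) vec \<Rightarrow> complex"

definition cinner :: "(complex, 'd::{finite,linorder}) vec \<Rightarrow> (complex, 'd) vec \<Rightarrow> complex" where
  "cinner mu lam = (\<Sum>r\<in>UNIV. mu$r * cnj (lam$r))"

definition holo_on :: "((complex, 'd::{finite,linorder}) vec) set \<Rightarrow> 'd hfun \<Rightarrow> bool" where
  "holo_on S f \<longleftrightarrow>
     (\<forall>z\<in>S. \<exists>L. (f has_derivative L) (at z) \<and> (\<forall>c v. L (c *s v) = c * L v))"

definition hnorm :: "(('d::{finite,linorder}) hfun \<Rightarrow> 'd hfun \<Rightarrow> complex) \<Rightarrow> 'd hfun \<Rightarrow> real" where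
  "hnorm ip f = sqrt (Re (ip f f))"

definition fun_hilbert_space :: "('d::{finite,linorder}) hfun set \<Rightarrow> ('d hfun \<Rightarrow> 'd hfun \<Rightarrow> complex) \<Rightarrow> bool" where
  "fun_hilbert_space H ip \<longleftrightarrow>
     (\<forall>f\<in>H. holo_on (ball 0 1) f \<and> (\<forall>z. z \<notin> ball 0 1 \<longrightarrow> f z = 0)) \<and>
     (\<lambda>z. 0) \<in> H \<and>
     (\<forall>f\<in>H. \<forall>g\<in>H. (\<lambda>z. f z + g z) \<in> H) \<and>
     (\<forall>c. \<forall>f\<in>H. (\<lambda>z. c * f z) \<in> H) \<and>
     (\<forall>f\<in>H. \<forall>g\<in>H. \<forall>h\<in>H. ip (\<lambda>z. f z + g z) h = ip f h + ip g h) \<and>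
     (\<forall>c. \<forall>f\<in>H. \<forall>g\<in>H. ip (\<lambda>z. c * f z) g = c * ip f g) \<and>
     (\<forall>f\<in>H. \<forall>g\<in>H. ip g f = cnj (ip f g)) \<and>
     (\<forall>f\<in>H. Im (ip f f) = 0 \<and> Re (ip f f) \<ge> 0) \<and>
     (\<forall>f\<in>H. ip f f = 0 \<longrightarrow> f = (\<lambda>z. 0)) \<and>
     (\<forall>s :: nat \<Rightarrow> _. (\<forall>n. s n \<in> H) \<longrightarrow>
        (\<forall>e>0. \<exists>N. \<forall>m\<ge>N. \<forall>n\<ge>N. hnorm ip (\<lambda>z. s m z - s n z) < e) \<longrightarrow>
        (\<exists>g\<in>H. \<forall>e>0. \<exists>N. \<forall>n\<ge>N. hnorm ip (\<lambda>z. s n z - g z) < e))"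

definition is_repr_kernel ::
  "('d::{finite,linorder}) hfun set \<Rightarrow> ('d hfun \<Rightarrow> 'd hfun \<Rightarrow> complex) \<Rightarrow> ((complex, 'd) vec \<Rightarrow> (complex, 'd) vec \<Rightarrow> complex) \<Rightarrow> bool" where
  "is_repr_kernel H ip k \<longleftrightarrow>
     (\<forall>lam\<in>ball 0 1.
        (\<lambda>mu. if mu \<in> ball 0 1 then k lam mu else 0) \<in> H \<and>
        (\<forall>f\<in>H. ip f (\<lambda>mu. if mu \<in> ball 0 1 then k lam mu else 0) = f lam))"

definition mult_op :: "('d::{finite,linorder}) \<Rightarrow> 'd hfun \<Rightarrow> 'd hfun" where
  "mult_op r f = (\<lambda>z. z$r * f z)"

definition bounded_op :: "('d::{finite,linorder}) hfun set \<Rightarrow> ('d hfun \<Rightarrow> 'd hfun \<Rightarrow> complex) \<Rightarrow> ('d hfun \<Rightarrow> 'd hfun) \<Rightarrow> bool" where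
  "bounded_op H ip A \<longleftrightarrow> (\<forall>f\<in>H. A f \<in> H) \<and> (\<exists>C. \<forall>f\<in>H. hnorm ip (A f) \<le> C * hnorm ip f)"

definition is_adjoint :: "('d::{finite,linorder}) hfun set \<Rightarrow> ('d hfun \<Rightarrow> 'd hfun \<Rightarrow> complex) \<Rightarrow> ('d hfun \<Rightarrow> 'd hfun) \<Rightarrow> ('d hfun \<Rightarrow> 'd hfun) \<Rightarrow> bool" where
  "is_adjoint H ip A A' \<longleftrightarrow> (\<forall>g\<in>H. A' g \<in> H) \<and> (\<forall>f\<in>H. \<forall>g\<in>H. ip (A f) g = ip f (A' g))"

(* Koszul (cochain) complex of a commuting tuple T = (T_r) on H: the degree-p part is
   H \<otimes> \<Lambda>^p(C^d), written as functions from subsets S of the index type (basis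
   e_S of \<Lambda>^p) to H, supported on sets of cardinality p; the differential is
   x \<mapsto> \<Sum>_j e_j \<and> T_j x. *)
definition koszul_chains :: "('d::{finite,linorder}) hfun set \<Rightarrow> nat \<Rightarrow> ('d set \<Rightarrow> 'd hfun) set" where
  "koszul_chains H p = {x. (\<forall>S. x S \<in> H) \<and> (\<forall>S. card S \<noteq> p \<longrightarrow> x S = (\<lambda>z. 0))}"

definition koszul_diff ::
  "(('d::{finite,linorder}) \<Rightarrow> 'd hfun \<Rightarrow> 'd hfun) \<Rightarrow> ('d set \<Rightarrow> 'd hfun) \<Rightarrow> ('d set \<Rightarrow> 'd hfun)" where
  "koszul_diff T x = (\<lambda>S z. \<Sum>j\<in>S. (-1) ^ card {i\<in>S. i < j} * T j (x (S - {j})) z)"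

definition koszul_cycles ::
  "(('d::{finite,linorder}) \<Rightarrow> 'd hfun \<Rightarrow> 'd hfun) \<Rightarrow> 'd hfun set \<Rightarrow> nat \<Rightarrow> ('d set \<Rightarrow> 'd hfun) set" where
  "koszul_cycles T H p = {x \<in> koszul_chains H p. koszul_diff T x = (\<lambda>S z. 0)}"

definition koszul_boundaries ::
  "(('d::{finite,linorder}) \<Rightarrow> 'd hfun \<Rightarrow> 'd hfun) \<Rightarrow> 'd hfun set \<Rightarrow> nat \<Rightarrow> ('d set \<Rightarrow> 'd hfun) set" where
  "koszul_boundaries T H p =
     (if p = 0 then {\<lambda>S z. 0} else koszul_diff T ` koszul_chains H (p - 1))"

definition koszul_exact :: "(('d::{finite,linorder}) \<Rightarrow> 'd hfun \<Rightarrow> 'd hfun) \<Rightarrow> 'd hfun set \<Rightarrow> bool" where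
  "koszul_exact T H \<longleftrightarrow> (\<forall>p. koszul_cycles T H p \<subseteq> koszul_boundaries T H p)"

(* all homology groups finite dimensional *)
definition koszul_fredholm :: "(('d::{finite,linorder}) \<Rightarrow> 'd hfun \<Rightarrow> 'd hfun) \<Rightarrow> 'd hfun set \<Rightarrow> bool" where
  "koszul_fredholm T H \<longleftrightarrow>
     (\<forall>p. \<exists>F. finite F \<and> F \<subseteq> koszul_cycles T H p \<and>
        (\<forall>x\<in>koszul_cycles T H p. \<exists>b\<in>koszul_boundaries T H p. \<exists>c.
            x = (\<lambda>S z. b S z + (\<Sum>f\<in>F. c f * f S z))))"

definition shifted_mult :: "(complex, 'd::{finite,linorder}) vec \<Rightarrow> 'd \<Rightarrow> 'd hfun \<Rightarrow> 'd hfun" where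
  "shifted_mult lam = (\<lambda>r f z. (z$r - lam$r) * f z)"

definition taylor_spectrum :: "('d::{finite,linorder}) hfun set \<Rightarrow> ((complex, 'd) vec) set" where
  "taylor_spectrum H = {lam. \<not> koszul_exact (shifted_mult lam) H}"

definition essential_taylor_spectrum :: "('d::{finite,linorder}) hfun set \<Rightarrow> ((complex, 'd) vec) set" where
  "essential_taylor_spectrum H = {lam. \<not> koszul_fredholm (shifted_mult lam) H}"

definition regular_space ::
  "('d::{finite,linorder}) hfun set \<Rightarrow> ('d hfun \<Rightarrow> 'd hfun \<Rightarrow> complex) \<Rightarrow> ((complex, 'd) vec \<Rightarrow> (complex, 'd) vec \<Rightarrow> complex) \<Rightarrow> bool" where
  "regular_space H ip k \<longleftrightarrow>
     fun_hilbert_space H ip \<and> is_repr_kernel H ip k \<and>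
     (\<forall>r. bounded_op H ip (mult_op r)) \<and>
     taylor_spectrum H \<subseteq> cball 0 1 \<and>
     essential_taylor_spectrum H \<subseteq> sphere 0 1 \<and>
     (\<forall>lam\<in>ball 0 1. \<forall>A'. (\<forall>r. is_adjoint H ip (\<lambda>f z. lam$r * f z - mult_op r f z) (A' r)) \<longrightarrow>
        (\<exists>g\<in>H. g \<noteq> (\<lambda>z. 0) \<and> (\<forall>r. A' r g = (\<lambda>z. 0)) \<and>
           (\<forall>h\<in>H. (\<forall>r. A' r h = (\<lambda>z. 0)) \<longrightarrow> (\<exists>c. h = (\<lambda>z. c * g z)))))"

(* positive semidefiniteness of an n x n block matrix [A_ij] with m x m blocks:
   \<Sum>_{i,j} <A_ij a_i, a_j> \<ge> 0 for all a_i \<in> C^m *)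
definition block_psd :: "nat \<Rightarrow> nat \<Rightarrow> (nat \<Rightarrow> nat \<Rightarrow> nat \<Rightarrow> nat \<Rightarrow> complex) \<Rightarrow> bool" where
  "block_psd n m A \<longleftrightarrow>
     (\<forall>a :: nat \<Rightarrow> nat \<Rightarrow> complex.
        let s = (\<Sum>i<n. \<Sum>j<n. \<Sum>p<m. \<Sum>q<m. A i j p q * a i q * cnj (a j p))
        in Im s = 0 \<and> Re s \<ge> 0)"

definition unitarily_equiv_mult ::
  "('d::{finite,linorder}) hfun set \<Rightarrow> ('d hfun \<Rightarrow> 'd hfun \<Rightarrow> complex) \<Rightarrow> 'd hfun set \<Rightarrow> ('d hfun \<Rightarrow> 'd hfun \<Rightarrow> complex) \<Rightarrow> bool" where
  "unitarily_equiv_mult H ip H' ip' \<longleftrightarrow>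
     (\<exists>U. bij_betw U H H' \<and>
        (\<forall>f\<in>H. \<forall>g\<in>H. ip' (U f) (U g) = ip f g) \<and>
        (\<forall>c. \<forall>f\<in>H. \<forall>g\<in>H. U (\<lambda>z. c * f z + g z) = (\<lambda>z. c * U f z + U g z)) \<and>
        (\<forall>r. \<forall>f\<in>H. U (mult_op r f) = mult_op r (U f)))"

end

theory Submission
  imports Defs "HOL-Complex_Analysis.Complex_Analysis"
begin

lemma cinner_add_left: "cinner (x + y) z = cinner x z + cinner y z"
  by (simp add: cinner_def distrib_right sum.distrib)
lemma cinner_diff_left: "cinner (x - y) z = cinner x z - cinner y z"
  by (simp add: cinner_def left_diff_distrib sum_subtractf)
lemma cinner_scale_left: "cinner (c *s x) z = c * cinner x z"
  by (simp add: cinner_def sum_distrib_left mult.assoc)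
lemma cinner_commute: "cinner y x = cnj (cinner x y)"
  by (simp add: cinner_def mult.commute)
lemma cinner_add_right: "cinner x (y + z) = cinner x y + cinner x z"
  by (simp add: cinner_def distrib_left sum.distrib)
lemma cinner_diff_right: "cinner x (y - z) = cinner x y - cinner x z"
  by (simp add: cinner_def right_diff_distrib sum_subtractf)
lemma cinner_scale_right: "cinner x (c *s z) = cnj c * cinner x z"
  by (simp add: cinner_def sum_distrib_left mult.assoc mult.left_commute)
lemma cinner_zero_left[simp]: "cinner 0 x = 0" by (simp add: cinner_def)
lemma cinner_zero_right[simp]: "cinner x 0 = 0" by (simp add: cinner_def)

lemma norm_vec_sq: "(norm (x::(complex,'d::{finite,linorder}) vec))^2 = (\<Sum>r\<in>UNIV. (cmod (x$r))^2)"
  by (simp add: norm_vec_def L2_set_def sum_nonneg)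

lemma cinner_self: "cinner x x = complex_of_real ((norm x)^2)"
  unfolding norm_vec_sq cinner_def of_real_sum
  by (simp add: complex_norm_square flip: of_real_power)

lemma cinner_CS: "cmod (cinner x y) \<le> norm x * norm y"
proof -
  have "cmod (cinner x y) \<le> (\<Sum>r\<in>UNIV. cmod (x$r) * cmod (y$r))"
    unfolding cinner_def using norm_sum[of "\<lambda>r. x$r * cnj (y$r)" UNIV] by (simp add: norm_mult)
  also have "\<dots> \<le> L2_set (\<lambda>r. cmod (x$r)) UNIV * L2_set (\<lambda>r. cmod (y$r)) UNIV"
    using L2_set_mult_ineq[of "\<lambda>r. cmod (x$r)" "\<lambda>r. cmod (y$r)" UNIV] by simp
  finally show ?thesis by (simp add: norm_vec_def)
qed

definition cdiff :: "(complex, 'd::{finite,linorder}) vec \<Rightarrow> ('d hfun) \<Rightarrow> bool" where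
  "cdiff z f \<longleftrightarrow> (\<exists>L. (f has_derivative L) (at z) \<and> (\<forall>c v. L (c *s v) = c * L v))"

lemma holo_on_cdiff: "holo_on S f \<longleftrightarrow> (\<forall>z\<in>S. cdiff z f)"
  by (simp add: holo_on_def cdiff_def)

lemma cdiff_const: "cdiff z (\<lambda>x. c)"
  unfolding cdiff_def by (rule exI[of _ "\<lambda>v. 0"]) auto

lemma cdiff_cinner: "cdiff z (\<lambda>x. cinner x b)"
proof -
  have bl: "bounded_linear (\<lambda>x. cinner x b)"
    unfolding cinner_def
    by (intro bounded_linear_sum bounded_linear_mult_left[THEN bounded_linear_compose] bounded_linear_vec_nth)
  show ?thesis unfolding cdiff_def
    by (rule exI[of _ "\<lambda>v. cinner v b"]) (simp add: bounded_linear.has_derivative[OF bl has_derivative_ident] cinner_scale_left)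
qed

lemma cdiff_add: "cdiff z f \<Longrightarrow> cdiff z g \<Longrightarrow> cdiff z (\<lambda>x. f x + g x)"
  unfolding cdiff_def
  apply (elim exE conjE)
  subgoal for L M by (rule exI[of _ "\<lambda>v. L v + M v"]) (auto intro: has_derivative_add simp: distrib_left[symmetric])
  done

lemma cdiff_diff: "cdiff z f \<Longrightarrow> cdiff z g \<Longrightarrow> cdiff z (\<lambda>x. f x - g x)"
  unfolding cdiff_def
  apply (elim exE conjE)
  subgoal for L M by (rule exI[of _ "\<lambda>v. L v - M v"]) (auto intro: has_derivative_diff simp: right_diff_distrib[symmetric])
  done

lemma cdiff_mult: "cdiff z f \<Longrightarrow> cdiff z g \<Longrightarrow> cdiff z (\<lambda>x. f x * g x)"
  unfolding cdiff_def
  apply (elim exE conjE)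
  subgoal for L M by (rule exI[of _ "\<lambda>v. f z * M v + L v * g z"]) (use has_derivative_mult[of f L z UNIV g M] in \<open>auto simp: algebra_simps\<close>)
  done

lemma cdiff_inverse: "cdiff z f \<Longrightarrow> f z \<noteq> 0 \<Longrightarrow> cdiff z (\<lambda>x. inverse (f x))"
  unfolding cdiff_def
  apply (elim exE conjE)
  subgoal for L
    apply (rule exI[of _ "\<lambda>h. - (inverse (f z) * L h * inverse (f z))"])
    apply (intro conjI)
     apply (rule Deriv.has_derivative_inverse; assumption)
    apply simp
    done
  done

lemma cdiff_divide: "cdiff z f \<Longrightarrow> cdiff z g \<Longrightarrow> g z \<noteq> 0 \<Longrightarrow> cdiff z (\<lambda>x. f x / g x)"
  using cdiff_mult[OF _ cdiff_inverse, of z f g] by (simp add: divide_inverse)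

lemma cdiff_transform: "cdiff z f \<Longrightarrow> open S \<Longrightarrow> z \<in> S \<Longrightarrow> (\<And>x. x \<in> S \<Longrightarrow> f x = g x) \<Longrightarrow> cdiff z g"
  unfolding cdiff_def using has_derivative_transform_within_open by blast

lemma cdiff_const_modulus_deriv:
  fixes h :: "'d::{finite,linorder} hfun"
  assumes hol: "holo_on (ball 0 1) h" and mod1: "\<forall>z\<in>ball 0 1. cmod (h z) = 1"
    and z: "z \<in> ball 0 1"
  shows "(h has_derivative (\<lambda>v. 0)) (at z)"
proof -
  obtain L where L: "(h has_derivative L) (at z)" and lin: "\<forall>c v. L (c *s v) = c * L v"
    using hol z unfolding holo_on_def by blast
  have q1: "((\<lambda>x. h x * cnj (h x)) has_derivative (\<lambda>v. h z * cnj (L v) + L v * cnj (h z))) (at z)"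
    using has_derivative_mult[OF L has_derivative_cnj[OF L]] .
  have "((\<lambda>x. h x * cnj (h x)) has_derivative (\<lambda>v. 0)) (at z)"
  proof (rule has_derivative_transform_within_open[where s="ball 0 1" and f="\<lambda>x. 1"])
    show "((\<lambda>x. 1) has_derivative (\<lambda>v. 0)) (at z)" by simp
    fix x assume "x \<in> ball (0::(complex,'d) vec) 1"
    then have "cmod (h x) = 1" using mod1 by blast
    then show "1 = h x * cnj (h x)"
      by (metis complex_norm_square mult.commute of_real_1 power_one)
  qed (use z in auto)
  with q1 have E: "(\<lambda>v. h z * cnj (L v) + L v * cnj (h z)) = (\<lambda>v. 0)"
    using has_derivative_unique by blast
  have "L v = 0" for v
  proof -
    have e1: "h z * cnj (L v) + L v * cnj (h z) = 0" using fun_cong[OF E, of v] by simp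
    have e2: "h z * cnj (L (\<i> *s v)) + L (\<i> *s v) * cnj (h z) = 0" using fun_cong[OF E, of "\<i> *s v"] by simp
    then have "h z * cnj (\<i> * L v) + \<i> * L v * cnj (h z) = 0" using lin by simp
    then have "\<i> * (L v * cnj (h z) - h z * cnj (L v)) = 0" by (simp add: algebra_simps)
    then have "L v * cnj (h z) - h z * cnj (L v) = 0" by simp
    with e1 have "2 * (L v * cnj (h z)) = 0" by (simp add: algebra_simps)
    moreover have "h z \<noteq> 0" using mod1 z by (metis norm_zero zero_neq_one)
    ultimately show ?thesis by simp
  qed
  then have "L = (\<lambda>v. 0)" by auto
  with L show ?thesis by simp
qed

lemma const_modulus_const:
  fixes h :: "'d::{finite,linorder} hfun"
  assumes hol: "holo_on (ball 0 1) h" and mod1: "\<forall>z\<in>ball 0 1. cmod (h z) = 1"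
  shows "\<exists>c. \<forall>z\<in>ball 0 1. h z = c"
  apply (rule has_derivative_zero_constant[OF convex_ball])
  using cdiff_const_modulus_deriv[OF hol mod1] has_derivative_at_withinI by blast

lemma cinner_self_real: "cinner x x = of_real ((norm x)^2)" by (rule cinner_self)

lemma cmod_cinner_lt1:
  assumes "norm z < 1" "norm a < 1" shows "cmod (cinner z a) < 1"
proof -
  have "cmod (cinner z a) \<le> norm z * norm a" by (rule cinner_CS)
  also have "\<dots> \<le> norm z" using assms by (simp add: mult_left_le)
  also have "\<dots> < 1" using assms by simp
  finally show ?thesis .
qed

lemma one_minus_cinner_nz:
  assumes "norm z < 1" "norm a < 1" shows "1 - cinner z a \<noteq> 0"
  using cmod_cinner_lt1[OF assms] by auto

definition nvec :: "(complex,'d::{finite,linorder}) vec \<Rightarrow> (complex,'d) vec \<Rightarrow> (complex,'d) vec" where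
  "nvec a z = (1 - (1 - of_real (sqrt (1 - (norm a)^2))) * (cinner z a / of_real ((norm a)^2))) *s a
              - of_real (sqrt (1 - (norm a)^2)) *s z"

lemma A_div: "of_real ((norm a)^2) * (cinner z a / of_real ((norm a)^2)) = cinner z a"
  by (cases "a = 0") auto

lemma A_div': "of_real ((norm a)^2) * (cinner a z / of_real ((norm a)^2)) = cinner a z"
  by (cases "a = 0") auto

lemma cinner_4:
  "cinner (al *s a - be *s z) (ga *s a - de *s y) =
     al * cnj ga * cinner a a - al * cnj de * cinner a y - be * cnj ga * cinner z a + be * cnj de * cinner z y"
  by (simp add: cinner_diff_left cinner_diff_right cinner_scale_left cinner_scale_right right_diff_distrib left_diff_distrib mult.assoc)

lemma nvec_inner:
  assumes a: "norm a < 1"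
  shows "cinner (nvec a z) (nvec a y) = of_real ((norm a)^2) - cinner z a - cinner a y
           + cinner z a * cinner a y + (1 - of_real ((norm a)^2)) * cinner z y"
proof -
  define A where "A = (norm a)^2"
  define s where "s = sqrt (1 - A)"
  have A1: "A < 1" using a unfolding A_def by (simp add: abs_square_less_1)
  have s2: "(complex_of_real s)^2 = 1 - complex_of_real A"
    using A1 unfolding s_def by (simp flip: of_real_power)
  define p where "p = cinner z a / of_real A"
  define q where "q = cinner a y / of_real A"
  have P: "cinner z a = of_real A * p" unfolding p_def A_def by (rule A_div[symmetric])
  have Q: "cinner a y = of_real A * q" unfolding q_def A_def by (rule A_div'[symmetric])
  have cq: "cnj (cinner y a) = cinner a y"
    by (simp add: cinner_commute[of a y])
  have aa: "cinner a a = of_real A" unfolding A_def by (rule cinner_self)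
  have "cinner (nvec a z) (nvec a y) =
     (1 - (1 - of_real s) * p) * (1 - (1 - of_real s) * q) * of_real A
     - (1 - (1 - of_real s) * p) * of_real s * cinner a y
     - of_real s * (1 - (1 - of_real s) * q) * cinner z a + (of_real s)^2 * cinner z y"
    unfolding nvec_def s_def[symmetric] A_def[symmetric] p_def[symmetric] cinner_4
    by (simp add: cq aa q_def power2_eq_square)
  also have "\<dots> = of_real A - cinner z a - cinner a y + cinner z a * cinner a y + (1 - of_real A) * cinner z y"
    unfolding P Q using s2 by algebra
  finally show ?thesis unfolding A_def .
qed

lemma cdiff_cmult: "cdiff z f \<Longrightarrow> cdiff z (\<lambda>x. c * f x)"
  using cdiff_mult[OF cdiff_const] .

lemma cinner_commute': "cinner a z = cnj (cinner z a)" by (rule cinner_commute)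

lemma cmod_sq_complex: "complex_of_real ((cmod x)^2) = x * cnj x"
  by (rule complex_norm_square)

lemma nvec_norm:
  assumes a: "norm a < 1"
  shows "(norm (nvec a z))^2 = (cmod (1 - cinner z a))^2 - (1 - (norm a)^2) * (1 - (norm z)^2)"
proof -
  have "complex_of_real ((norm (nvec a z))^2) = cinner (nvec a z) (nvec a z)"
    by (simp add: cinner_self)
  also have "\<dots> = of_real ((norm a)^2) - cinner z a - cnj (cinner z a)
           + cinner z a * cnj (cinner z a) + (1 - of_real ((norm a)^2)) * of_real ((norm z)^2)"
    using nvec_inner[OF a, of z z] by (simp add: cinner_commute'[of a z] cinner_self)
  also have "\<dots> = complex_of_real ((cmod (1 - cinner z a))^2 - (1 - (norm a)^2) * (1 - (norm z)^2))"
    by (simp only: of_real_diff of_real_mult cmod_sq_complex) (simp add: algebra_simps)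
  finally show ?thesis using of_real_eq_iff by blast
qed

lemma nvec_self: "nvec a a = 0"
proof (cases "a = 0")
  case True then show ?thesis by (simp add: nvec_def)
next
  case False
  then have "cinner a a / of_real ((norm a)^2) = 1" by (simp add: cinner_self)
  then show ?thesis by (simp add: nvec_def algebra_simps)
qed

lemma nvec_eq0:
  assumes a: "norm a < 1" and n0: "nvec a w = 0"
  shows "w = a"
proof -
  define A where "A = (norm a)^2"
  define s where "s = sqrt (1 - A)"
  have A1: "A < 1" using a unfolding A_def by (simp add: abs_square_less_1)
  have s0: "s > 0" using A1 unfolding s_def by simp
  define al where "al = 1 - (1 - complex_of_real s) * (cinner w a / of_real A)"
  have eq: "al *s a = of_real s *s w"
    using n0 unfolding nvec_def al_def s_def A_def by (simp add: algebra_simps)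
  have "w = (1 / of_real s) *s (of_real s *s w)" using s0 by simp
  then have w: "w = (al / of_real s) *s a"
    unfolding eq[symmetric] by simp
  show ?thesis
  proof (cases "a = 0")
    case True then show ?thesis using w by simp
  next
    case False
    then have A0: "A \<noteq> 0" unfolding A_def by simp
    have "cinner w a = (al / of_real s) * of_real A"
      using w by (simp add: cinner_scale_left cinner_self A_def)
    then have c: "cinner w a / of_real A = al / of_real s" using A0 by simp
    from al_def have "al = 1 - (1 - complex_of_real s) * (cinner w a / of_real A)" .
    then have "al = 1 - (1 - complex_of_real s) * (al / of_real s)" by (simp only: c)
    then have "al * of_real s = of_real s - (1 - complex_of_real s) * al" using s0 by (simp add: field_simps)
    then have "al = of_real s" by (simp add: algebra_simps)
    then show ?thesis using w s0 by simp
  qed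
qed

definition pd :: "(complex,'d::{finite,linorder}) vec \<Rightarrow> (complex,'d) vec \<Rightarrow> real" where
  "pd a w = norm (nvec a w) / cmod (1 - cinner w a)"

lemma pd_sq:
  assumes "norm a < 1" "norm w < 1"
  shows "(pd a w)^2 = 1 - (1 - (norm a)^2) * (1 - (norm w)^2) / (cmod (1 - cinner w a))^2"
proof -
  have "cmod (1 - cinner w a) \<noteq> 0" using one_minus_cinner_nz[OF assms(2,1)] by simp
  then show ?thesis unfolding pd_def power_divide nvec_norm[OF assms(1)]
    by (simp add: field_simps)
qed

lemma cdiff_nvec_inner:
  "cdiff z (\<lambda>x. cinner (nvec a x) v)"
proof -
  have "(\<lambda>x. cinner (nvec a x) v) = (\<lambda>x. (1 - (1 - of_real (sqrt (1 - (norm a)^2))) * (cinner x a * (1 / of_real ((norm a)^2)))) * cinner a v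
        - of_real (sqrt (1 - (norm a)^2)) * cinner x v)"
    by (rule ext) (simp add: nvec_def cinner_diff_left cinner_scale_left left_diff_distrib)
  moreover have "cdiff z \<dots>"
    by (intro cdiff_diff cdiff_mult cdiff_const cdiff_cinner)
  ultimately show ?thesis by simp
qed

lemma schur_exists:
  assumes a: "norm a < 1" and w: "norm w < 1" and aw: "a \<noteq> w"
  shows "\<exists>\<phi>. holo_on (ball 0 1) \<phi> \<and> (\<forall>z\<in>ball 0 1. cmod (\<phi> z) \<le> 1) \<and> \<phi> a = 0
          \<and> \<phi> w = complex_of_real (pd a w)"
proof -
  define D where "D = cmod (1 - cinner w a)"
  have D0: "D > 0" unfolding D_def using one_minus_cinner_nz[OF w a] by simp
  have nw0: "norm (nvec a w) > 0" using nvec_eq0[OF a] aw by auto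
  define d where "d = pd a w"
  have d0: "d > 0" unfolding d_def pd_def using D0 nw0 D_def by simp
  have caw: "cmod (1 - cinner a w) = D"
    unfolding D_def cinner_commute'[of a w] by (metis complex_cnj_diff complex_cnj_one complex_mod_cnj)
  define \<phi> where "\<phi> z = cinner (nvec a z) (nvec a w) / ((1 - cinner z a) * (1 - cinner a w) * of_real d)" for z
  have hol: "holo_on (ball 0 1) \<phi>"
    unfolding holo_on_cdiff
  proof
    fix z :: "(complex,'a) vec" assume z: "z \<in> ball 0 1"
    have "(1 - cinner z a) * (1 - cinner a w) * of_real d \<noteq> 0"
      using one_minus_cinner_nz[of z a] one_minus_cinner_nz[of a w] z a w d0 by auto
    then show "cdiff z \<phi>"
      unfolding \<phi>_def
      by (intro cdiff_divide cdiff_mult cdiff_diff cdiff_const cdiff_cinner cdiff_nvec_inner)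
  qed
  have bnd: "cmod (\<phi> z) \<le> 1" if z: "z \<in> ball 0 1" for z
  proof -
    have nz: "norm z < 1" using z by simp
    have Dz: "cmod (1 - cinner z a) > 0" using one_minus_cinner_nz[OF nz a] by simp
    have "(norm (nvec a z))^2 \<le> (cmod (1 - cinner z a))^2"
      unfolding nvec_norm[OF a]
    proof -
      have "(norm a)^2 < 1" "(norm z)^2 < 1" using a nz by (simp_all add: abs_square_less_1)
      then show "(cmod (1 - cinner z a))\<^sup>2 - (1 - (norm a)\<^sup>2) * (1 - (norm z)\<^sup>2) \<le> (cmod (1 - cinner z a))\<^sup>2"
        by simp
    qed
    then have nz1: "norm (nvec a z) \<le> cmod (1 - cinner z a)"
      by (simp add: power_mono_iff)
    have "cmod (\<phi> z) = cmod (cinner (nvec a z) (nvec a w)) / (cmod (1 - cinner z a) * D * d)"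
      unfolding \<phi>_def using d0 by (simp add: norm_mult norm_divide caw)
    also have "\<dots> \<le> norm (nvec a z) * norm (nvec a w) / (cmod (1 - cinner z a) * D * d)"
      using Dz D0 d0 by (intro divide_right_mono cinner_CS) auto
    also have "\<dots> = norm (nvec a z) / cmod (1 - cinner z a)"
      using Dz D0 d0 unfolding d_def pd_def D_def[symmetric] by (simp add: field_simps)
    also have "\<dots> \<le> 1" using nz1 Dz by simp
    finally show ?thesis .
  qed
  have pa: "\<phi> a = 0" unfolding \<phi>_def by (simp add: nvec_self)
  have pw: "\<phi> w = of_real d"
  proof -
    have "(1 - cinner w a) * (1 - cinner a w) = of_real (D^2)"
      unfolding D_def cmod_sq_complex cinner_commute'[of a w] by simp
    then have "\<phi> w = of_real ((norm (nvec a w))^2 / (D^2 * d))"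
      unfolding \<phi>_def by (simp add: cinner_self)
    also have "(norm (nvec a w))^2 / (D^2 * d) = d"
      using D0 d0 nw0 unfolding d_def pd_def D_def[symmetric] by (simp add: field_simps power2_eq_square)
    finally show ?thesis .
  qed
  show ?thesis using hol bnd pa pw d_def by blast
qed

lemma norm_smult_vec: "norm (h *s (v::(complex,'d::finite) vec)) = cmod h * norm v"
proof -
  have "norm (h *s v) = L2_set (\<lambda>i. cmod h * cmod (v$i)) UNIV"
    by (simp add: norm_vec_def norm_mult)
  also have "\<dots> = cmod h * norm v"
    by (simp add: norm_vec_def L2_set_right_distrib)
  finally show ?thesis .
qed

lemma scaleR_smult_vec: "r *\<^sub>R (x *s (v::(complex,'d::finite) vec)) = (of_real r * x) *s v"
  apply (simp add: vec_eq_iff)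
  apply (simp add: scaleR_conv_of_real)
  done

lemma bl_smult_vec: "bounded_linear (\<lambda>h::complex. h *s (v::(complex,'d::finite) vec))"
  apply (rule bounded_linear_intro[of _ "norm v"])
    apply (simp add: vector_sadd_rdistrib)
   apply (simp add: scaleR_smult_vec)
   apply (simp add: scaleR_conv_of_real)
  apply (simp add: norm_smult_vec)
  done

lemma slice_holomorphic:
  fixes \<phi> :: "'d::{finite,linorder} hfun"
  assumes hol: "holo_on (ball 0 1) \<phi>"
    and inb: "\<And>\<zeta>. norm \<zeta> < 1 \<Longrightarrow> p + \<zeta> *s u \<in> ball 0 1"
  shows "(\<lambda>\<zeta>. \<phi> (p + \<zeta> *s u)) holomorphic_on ball 0 1"
  unfolding holomorphic_on_def
proof
  fix \<zeta> :: complex assume "\<zeta> \<in> ball 0 1"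
  then have z: "p + \<zeta> *s u \<in> ball 0 1" using inb by simp
  obtain L where L: "(\<phi> has_derivative L) (at (p + \<zeta> *s u))" and lin: "\<forall>c v. L (c *s v) = c * L v"
    using hol z unfolding holo_on_def by blast
  have g: "((\<lambda>\<zeta>. p + \<zeta> *s u) has_derivative (\<lambda>h. h *s u)) (at \<zeta>)"
    using has_derivative_add[OF has_derivative_const[of p] bounded_linear.has_derivative[OF bl_smult_vec has_derivative_ident]] by simp
  have "((\<lambda>\<zeta>. \<phi> (p + \<zeta> *s u)) has_derivative (\<lambda>h. L (h *s u))) (at \<zeta>)"
    using has_derivative_compose[OF g L] by (simp add: o_def)
  moreover have "(\<lambda>h. L (h *s u)) = (*) (L u)"
    using lin by (auto simp: mult.commute)
  ultimately have "((\<lambda>\<zeta>. \<phi> (p + \<zeta> *s u)) has_field_derivative L u) (at \<zeta>)"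
    by (simp add: has_field_derivative_def)
  then show "(\<lambda>\<zeta>. \<phi> (p + \<zeta> *s u)) field_differentiable at \<zeta> within ball 0 1"
    using field_differentiable_at_within field_differentiable_def by blast
qed

lemma schwarz_le:
  assumes hol: "g holomorphic_on ball 0 1" and g0: "g 0 = 0"
    and bnd: "\<And>z. norm z < 1 \<Longrightarrow> cmod (g z) \<le> 1" and r: "norm \<rho> < 1"
  shows "cmod (g \<rho>) \<le> cmod \<rho>"
proof (rule ccontr)
  assume "\<not> ?thesis"
  then have gt: "cmod \<rho> < cmod (g \<rho>)" by simp
  then have g0': "cmod (g \<rho>) > 0" by (meson le_less_trans norm_ge_zero)
  define c where "c = (1 + cmod \<rho> / cmod (g \<rho>)) / 2"
  have q: "cmod \<rho> / cmod (g \<rho>) < 1" using gt g0' by simp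
  have c1: "c < 1" using q unfolding c_def by simp
  have aux: "\<And>x::real. x < 1 \<Longrightarrow> x < (1 + x) / 2" by simp
  have c0: "c > cmod \<rho> / cmod (g \<rho>)" using aux[OF q] unfolding c_def .
  have "cmod \<rho> / cmod (g \<rho>) \<ge> 0" by simp
  then have cpos: "c > 0" using c0 by linarith
  have "cmod ((\<lambda>z. of_real c * g z) \<rho>) \<le> cmod \<rho>"
  proof (rule Schwarz_Lemma(1))
    show "(\<lambda>z. complex_of_real c * g z) holomorphic_on ball 0 1"
      by (intro holomorphic_intros hol)
    show "complex_of_real c * g 0 = 0" using g0 by simp
    fix z :: complex assume "norm z < 1"
    then show "cmod (complex_of_real c * g z) < 1"
    proof -
      have "cmod (complex_of_real c * g z) = c * cmod (g z)" using cpos by (simp add: norm_mult)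
      also have "\<dots> \<le> c" using bnd[of z] \<open>norm z < 1\<close> cpos by (simp add: mult_left_le)
      finally show ?thesis using c1 by simp
    qed
  qed (use r in auto)
  then have "c * cmod (g \<rho>) \<le> cmod \<rho>" using cpos by (simp add: norm_mult)
  moreover have "c * cmod (g \<rho>) > cmod \<rho>" using c0 g0' by (simp add: field_simps)
  ultimately show False by simp
qed

lemma cinner_smult_self: "cinner (c *s x) (c *s x) = c * cnj c * cinner x x"
  by (simp add: cinner_scale_left cinner_scale_right mult.assoc)

lemma cmod_sq2: "(complex_of_real (cmod z))^2 = z * cnj z"
  using complex_norm_square[of z] by (simp only: of_real_power)

lemma ball_schwarz_pick:
  fixes \<phi> :: "'d::{finite,linorder} hfun"
  assumes hol: "holo_on (ball 0 1) \<phi>" and bnd: "\<forall>z\<in>ball 0 1. cmod (\<phi> z) \<le> 1"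
    and a: "norm a < 1" and w: "norm w < 1" and aw: "a \<noteq> w" and pa: "\<phi> a = 0"
  shows "cmod (\<phi> w) \<le> pd a w"
proof -
  define t where "t = norm (w - a)"
  have t0: "t > 0" using aw unfolding t_def by simp
  define u where "u = complex_of_real (1/t) *s (w - a)"
  have nu: "norm u = 1" unfolding u_def norm_smult_vec t_def[symmetric] using t0 by (simp add: norm_divide)
  have uu: "cinner u u = 1" using nu by (simp add: cinner_self)
  have tu: "complex_of_real t *s u = w - a" unfolding u_def using t0 by simp
  define A where "A = (norm a)^2"
  have A1: "A < 1" using a unfolding A_def by (simp add: abs_square_less_1)
  have aa: "cinner a a = of_real A" unfolding A_def by (simp add: cinner_self)
  define \<beta> where "\<beta> = cinner a u"
  have ua: "cinner u a = cnj \<beta>" unfolding \<beta>_def by (simp add: cinner_commute'[of u a])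
  define r where "r = sqrt (1 - A + (cmod \<beta>)^2)"
  have r2: "r^2 = 1 - A + (cmod \<beta>)^2" unfolding r_def using A1 by simp
  have r0: "r > 0" unfolding r_def using A1
    by (metis add_nonneg_pos diff_gt_0_iff_gt real_sqrt_gt_0_iff zero_le_power2 add.commute)
  define p where "p = a - \<beta> *s u"
  have pu: "cinner p u = 0" unfolding p_def by (simp add: cinner_diff_left cinner_scale_left uu \<beta>_def)
  have up: "cinner u p = 0" using pu by (simp add: cinner_commute'[of u p])
  have pp: "cinner p p = of_real (A - (cmod \<beta>)^2)"
    unfolding p_def
    by (simp add: cinner_diff_left cinner_diff_right cinner_scale_left cinner_scale_right uu aa ua
        \<beta>_def[symmetric] complex_norm_square cmod_sq2 algebra_simps)
  have nf: "(norm (p + c *s u))^2 = A - (cmod \<beta>)^2 + (cmod c)^2" for c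
  proof -
    have "complex_of_real ((norm (p + c *s u))^2) = cinner (p + c *s u) (p + c *s u)"
      by (simp add: cinner_self)
    also have "\<dots> = cinner p p + cnj c * cinner p u + c * cinner u p + c * cnj c * cinner u u"
      by (simp add: cinner_add_left cinner_add_right cinner_scale_left cinner_scale_right algebra_simps)
    also have "\<dots> = of_real (A - (cmod \<beta>)^2 + (cmod c)^2)"
      by (simp add: pp pu up uu complex_norm_square cmod_sq2)
    finally show ?thesis using of_real_eq_iff by blast
  qed
  define v where "v = complex_of_real r *s u"
  have pv: "p + \<zeta> *s v = p + (\<zeta> * of_real r) *s u" for \<zeta>
    unfolding v_def by (simp add: vector_smult_assoc)
  have inb: "p + \<zeta> *s v \<in> ball 0 1" if "norm \<zeta> < 1" for \<zeta>
  proof -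
    have "(cmod (\<zeta> * of_real r))^2 < r^2"
      using that r0 by (simp add: norm_mult power_mult_distrib abs_square_less_1)
    then have "(norm (p + \<zeta> *s v))^2 < 1" unfolding pv nf r2 by simp
    then show ?thesis by (simp add: abs_square_less_1)
  qed
  define h where "h \<zeta> = \<phi> (p + \<zeta> *s v)" for \<zeta>
  have holh: "h holomorphic_on ball 0 1"
    unfolding h_def by (rule slice_holomorphic[OF hol inb])
  have hb: "cmod (h \<zeta>) \<le> 1" if "norm \<zeta> < 1" for \<zeta>
    using bnd inb[OF that] unfolding h_def by blast
  define xa where "xa = \<beta> / of_real r"
  define xw where "xw = (\<beta> + of_real t) / of_real r"
  have hxa: "h xa = 0"
  proof -
    have "p + xa *s v = a" unfolding pv unfolding xa_def p_def using r0 by simp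
    then show ?thesis unfolding h_def using pa by simp
  qed
  have pw: "p + (\<beta> + of_real t) *s u = w"
    unfolding p_def by (simp add: vector_sadd_rdistrib tu)
  have hxw: "h xw = \<phi> w"
  proof -
    have "p + xw *s v = w" unfolding pv xw_def using r0 pw by simp
    then show ?thesis unfolding h_def by simp
  qed
  have xa1: "norm xa < 1"
  proof -
    have "(cmod \<beta>)^2 < r^2" using r2 A1 by simp
    then have "cmod \<beta> < r" using r0 by (simp add: power_less_imp_less_base)
    then show ?thesis unfolding xa_def using r0 by (simp add: norm_divide)
  qed
  have w2: "(norm w)^2 = A - (cmod \<beta>)^2 + (cmod (\<beta> + of_real t))^2"
    using nf[of "\<beta> + of_real t"] pw by simp
  have xw1: "norm xw < 1"
  proof -
    have "(norm w)^2 < 1" using w by (simp add: abs_square_less_1)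
    then have "(cmod (\<beta> + of_real t))^2 < r^2" using w2 r2 by simp
    then have "cmod (\<beta> + of_real t) < r" using r0 by (simp add: power_less_imp_less_base)
    then show ?thesis unfolding xw_def using r0 by (simp add: norm_divide)
  qed
  define M where "M = Moebius_function 0 (- xa)"
  have M_eq: "M \<zeta> = (\<zeta> + xa) / (1 + cnj xa * \<zeta>)" for \<zeta>
    unfolding M_def Moebius_function_def by simp
  have Mb: "M ` ball 0 1 \<subseteq> ball 0 1"
    unfolding M_def using Moebius_function_norm_lt_1[of "- xa"] xa1 by auto
  have holM: "M holomorphic_on ball 0 1"
    unfolding M_def using Moebius_function_holomorphic xa1 by simp
  define g where "g = h \<circ> M"
  have holg: "g holomorphic_on ball 0 1"
    unfolding g_def by (rule holomorphic_on_compose_gen[OF holM holh Mb])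
  have g0: "g 0 = 0" unfolding g_def using M_eq[of 0] hxa by simp
  have gb: "cmod (g \<zeta>) \<le> 1" if "norm \<zeta> < 1" for \<zeta>
  proof -
    have "\<zeta> \<in> ball 0 1" using that by simp
    then have "M \<zeta> \<in> ball 0 1" using Mb by blast
    then show ?thesis unfolding g_def using hb[of "M \<zeta>"] by simp
  qed
  define \<rho> where "\<rho> = (xw - xa) / (1 - cnj xa * xw)"
  have \<rho>1: "norm \<rho> < 1"
    using Moebius_function_norm_lt_1[OF xa1 xw1, of 0] unfolding \<rho>_def Moebius_function_def by simp
  have den: "1 - cnj xa * xw \<noteq> 0"
  proof -
    have "cmod (cnj xa * xw) < 1" using xa1 xw1
      by (simp add: norm_mult) (meson le_less_trans mult_left_le_one_le norm_ge_zero less_imp_le)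
    then show ?thesis by auto
  qed
  have den2: "1 - cnj xa * xa \<noteq> 0"
  proof -
    have "cmod (cnj xa * xa) < 1" using xa1
      by (simp add: norm_mult) (meson le_less_trans mult_left_le_one_le norm_ge_zero less_imp_le)
    then show ?thesis by auto
  qed
  have Mrho: "M \<rho> = xw"
  proof -
    have "1 + cnj xa * \<rho> = (1 - cnj xa * xa) / (1 - cnj xa * xw)"
      unfolding \<rho>_def using den by (simp add: field_simps)
    moreover have "\<rho> + xa = xw * (1 - cnj xa * xa) / (1 - cnj xa * xw)"
      unfolding \<rho>_def using den by (simp add: field_simps)
    ultimately show ?thesis unfolding M_eq using den den2 by simp
  qed
  have le: "cmod (\<phi> w) \<le> cmod \<rho>"
    using schwarz_le[OF holg g0 gb \<rho>1] Mrho hxw unfolding g_def by simp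
  define D where "D = cmod (1 - cinner w a)"
  have D0: "D > 0" unfolding D_def using one_minus_cinner_nz[OF w a] by simp
  have wa: "1 - cinner w a = 1 - of_real A - of_real t * cnj \<beta>"
  proof -
    have "w = a + complex_of_real t *s u" using tu by simp
    then have "cinner w a = cinner a a + of_real t * cinner u a"
      by (metis cinner_add_left cinner_scale_left)
    then show ?thesis using aa ua by simp
  qed
  have num: "xw - xa = of_real (t / r)" unfolding xw_def xa_def by (simp add: diff_divide_distrib[symmetric])
  have rc: "complex_of_real (r^2) = 1 - of_real A + \<beta> * cnj \<beta>"
    unfolding r2 by (simp add: complex_norm_square cmod_sq2)
  have dd: "1 - cnj xa * xw = (1 - cinner w a) / of_real (r^2)"
  proof -
    have "1 - cnj xa * xw = (of_real (r^2) - cnj \<beta> * (\<beta> + of_real t)) / of_real (r^2)"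
      unfolding xa_def xw_def using r0 by (simp add: field_simps power2_eq_square)
    also have "of_real (r^2) - cnj \<beta> * (\<beta> + of_real t) = 1 - cinner w a"
      unfolding rc wa by (simp add: algebra_simps)
    finally show ?thesis .
  qed
  have rho_eq: "cmod \<rho> = t * r / D"
    unfolding \<rho>_def num dd D_def using r0 t0 by (simp add: norm_divide norm_mult power2_eq_square)
  have key: "D^2 - (1 - A) * (1 - (norm w)^2) = t^2 * r^2"
  proof -
    have D2: "D^2 = (1 - A - t * Re \<beta>)^2 + (t * Im \<beta>)^2"
      unfolding D_def wa by (simp add: cmod_power2)
    have b2: "(cmod \<beta>)^2 = (Re \<beta>)^2 + (Im \<beta>)^2" by (simp add: cmod_power2)
    have bt2: "(cmod (\<beta> + of_real t))^2 = (Re \<beta> + t)^2 + (Im \<beta>)^2" by (simp add: cmod_power2)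
    show ?thesis unfolding D2 w2 r2 b2 bt2 by (simp add: algebra_simps power2_eq_square)
  qed
  have "(pd a w)^2 = (cmod \<rho>)^2"
  proof -
    have "(pd a w)^2 = 1 - (1 - A) * (1 - (norm w)^2) / D^2"
      unfolding pd_sq[OF a w] A_def D_def ..
    also have "\<dots> = (D^2 - (1 - A) * (1 - (norm w)^2)) / D^2" using D0 by (simp add: field_simps)
    also have "\<dots> = (cmod \<rho>)^2" unfolding key rho_eq using D0 by (simp add: power_divide power_mult_distrib)
    finally show ?thesis .
  qed
  moreover have "pd a w \<ge> 0" unfolding pd_def by simp
  ultimately have "pd a w = cmod \<rho>" by (simp add: power2_eq_iff_nonneg)
  with le show ?thesis by simp
qed

definition psdq :: "complex \<Rightarrow> bool" where "psdq s \<longleftrightarrow> Im s = 0 \<and> Re s \<ge> 0"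

lemma psd2_iff:
  "block_psd 2 1 F \<longleftrightarrow> (\<forall>x y. psdq (F 0 0 0 0 * x * cnj x + F 0 1 0 0 * x * cnj y
                                    + F 1 0 0 0 * y * cnj x + F 1 1 0 0 * y * cnj y))"
proof -
  have sum2: "(\<Sum>i<2. g i) = g 0 + g (1::nat)" for g :: "nat \<Rightarrow> complex"
    by (simp add: numeral_2_eq_2)
  have e: "(\<Sum>i<2. \<Sum>j<2. \<Sum>p<1. \<Sum>q<1. F i j p q * a i q * cnj (a j p)) =
        F 0 0 0 0 * a 0 0 * cnj (a 0 0) + F 0 1 0 0 * a 0 0 * cnj (a 1 0)
      + F 1 0 0 0 * a 1 0 * cnj (a 0 0) + F 1 1 0 0 * a 1 0 * cnj (a 1 0)" for a
    by (simp add: sum2)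
  show ?thesis
    unfolding block_psd_def Let_def e psdq_def
  proof (intro iffI allI)
    fix x y assume H: "\<forall>a::nat\<Rightarrow>nat\<Rightarrow>complex. Im (F 0 0 0 0 * a 0 0 * cnj (a 0 0) + F 0 1 0 0 * a 0 0 * cnj (a 1 0) +
                   F 1 0 0 0 * a 1 0 * cnj (a 0 0) + F 1 1 0 0 * a 1 0 * cnj (a 1 0)) = 0 \<and>
             0 \<le> Re (F 0 0 0 0 * a 0 0 * cnj (a 0 0) + F 0 1 0 0 * a 0 0 * cnj (a 1 0) +
                   F 1 0 0 0 * a 1 0 * cnj (a 0 0) + F 1 1 0 0 * a 1 0 * cnj (a 1 0))"
    show "Im (F 0 0 0 0 * x * cnj x + F 0 1 0 0 * x * cnj y + F 1 0 0 0 * y * cnj x + F 1 1 0 0 * y * cnj y) = 0 \<and>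
          0 \<le> Re (F 0 0 0 0 * x * cnj x + F 0 1 0 0 * x * cnj y + F 1 0 0 0 * y * cnj x + F 1 1 0 0 * y * cnj y)"
    proof -
      define a :: "nat \<Rightarrow> nat \<Rightarrow> complex" where "a i q = (if i = 0 then x else y)" for i q
      have "a 0 0 = x" "a 1 0 = y" unfolding a_def by simp_all
      then show ?thesis using H[rule_format, of a] by simp
    qed
  next
    fix a :: "nat \<Rightarrow> nat \<Rightarrow> complex"
    assume H: "\<forall>x y. Im (F 0 0 0 0 * x * cnj x + F 0 1 0 0 * x * cnj y + F 1 0 0 0 * y * cnj x + F 1 1 0 0 * y * cnj y) = 0 \<and>
          0 \<le> Re (F 0 0 0 0 * x * cnj x + F 0 1 0 0 * x * cnj y + F 1 0 0 0 * y * cnj x + F 1 1 0 0 * y * cnj y)"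
    show "Im (F 0 0 0 0 * a 0 0 * cnj (a 0 0) + F 0 1 0 0 * a 0 0 * cnj (a 1 0) +
                   F 1 0 0 0 * a 1 0 * cnj (a 0 0) + F 1 1 0 0 * a 1 0 * cnj (a 1 0)) = 0 \<and>
             0 \<le> Re (F 0 0 0 0 * a 0 0 * cnj (a 0 0) + F 0 1 0 0 * a 0 0 * cnj (a 1 0) +
                   F 1 0 0 0 * a 1 0 * cnj (a 0 0) + F 1 1 0 0 * a 1 0 * cnj (a 1 0))"
      using H by blast
  qed
qed

lemma exists_other_point:
  assumes "norm (l::(complex,'d::{finite,linorder}) vec) < 1"
  shows "\<exists>l'. norm l' < 1 \<and> l' \<noteq> l"
proof (cases "l = 0")
  case True
  obtain i :: 'd where True by simp
  define v :: "(complex,'d) vec" where "v = axis i (1/2)"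
  have "norm v \<le> (\<Sum>j\<in>UNIV. norm (v$j))" by (simp add: norm_vec_def L2_set_le_sum)
  also have "(\<lambda>j. norm (v$j)) = (\<lambda>j. if j = i then 1/2 else 0)"
    unfolding v_def by (auto simp: axis_def)
  also have "(\<Sum>j\<in>UNIV. (if j = i then 1/2 else 0)) = (1/2::real)" by simp
  finally have "norm v < 1" by simp
  moreover have "v \<noteq> 0" unfolding v_def by (simp add: axis_def vec_eq_iff)
  ultimately show ?thesis using True by blast
next
  case False
  have "norm ((1/2::complex) *s l) < 1" using assms by (simp add: norm_smult_vec)
  moreover have "(1/2::complex) *s l \<noteq> l"
  proof
    assume E: "(1/2::complex) *s l = l"
    have "l$i = 0" for i
    proof -
      have "(1/2) * l$i = l$i" using E by (metis vector_smult_component)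
      then show ?thesis by simp
    qed
    then show False using False by (simp add: vec_eq_iff)
  qed
  ultimately show ?thesis by blast
qed

definition Kf :: "((complex,'d::{finite,linorder}) vec \<Rightarrow> (complex,'d) vec \<Rightarrow> complex) \<Rightarrow> (complex,'d) vec \<Rightarrow> 'd hfun" where
  "Kf k l = (\<lambda>mu. if mu \<in> ball 0 1 then k l mu else 0)"

lemma kern_in: "is_repr_kernel H ip k \<Longrightarrow> l \<in> ball 0 1 \<Longrightarrow> Kf k l \<in> H"
  unfolding is_repr_kernel_def Kf_def by blast

lemma kern_repr: "is_repr_kernel H ip k \<Longrightarrow> l \<in> ball 0 1 \<Longrightarrow> f \<in> H \<Longrightarrow> ip f (Kf k l) = f l"
  unfolding is_repr_kernel_def Kf_def by blast

lemma k_ip: "is_repr_kernel H ip k \<Longrightarrow> l \<in> ball 0 1 \<Longrightarrow> m \<in> ball 0 1 \<Longrightarrow> k l m = ip (Kf k l) (Kf k m)"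
  using kern_repr[of H ip k m "Kf k l"] kern_in[of H ip k l] by (simp add: Kf_def)

lemma k_herm: "fun_hilbert_space H ip \<Longrightarrow> is_repr_kernel H ip k \<Longrightarrow> l \<in> ball 0 1 \<Longrightarrow> m \<in> ball 0 1
   \<Longrightarrow> k l m = cnj (k m l)"
proof -
  assume hs: "fun_hilbert_space H ip" and rk: "is_repr_kernel H ip k" and l: "l \<in> ball 0 1" and m: "m \<in> ball 0 1"
  have cs: "\<forall>f\<in>H. \<forall>g\<in>H. ip g f = cnj (ip f g)" using hs unfolding fun_hilbert_space_def by blast
  have "k l m = ip (Kf k l) (Kf k m)" by (rule k_ip[OF rk l m])
  also have "\<dots> = cnj (ip (Kf k m) (Kf k l))" using cs kern_in[OF rk l] kern_in[OF rk m] by blast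
  also have "\<dots> = cnj (k m l)" using k_ip[OF rk m l] by simp
  finally show ?thesis .
qed

lemma k_diag: "fun_hilbert_space H ip \<Longrightarrow> is_repr_kernel H ip k \<Longrightarrow> l \<in> ball 0 1
   \<Longrightarrow> k l l = of_real (Re (k l l)) \<and> Re (k l l) \<ge> 0"
proof -
  assume hs: "fun_hilbert_space H ip" and rk: "is_repr_kernel H ip k" and l: "l \<in> ball 0 1"
  have ps: "\<forall>f\<in>H. Im (ip f f) = 0 \<and> Re (ip f f) \<ge> 0" using hs unfolding fun_hilbert_space_def by blast
  then have "Im (k l l) = 0 \<and> Re (k l l) \<ge> 0" using k_ip[OF rk l l] kern_in[OF rk l] by simp
  then show ?thesis by (simp add: complex_eq_iff)
qed

lemma k_zero: "fun_hilbert_space H ip \<Longrightarrow> is_repr_kernel H ip k \<Longrightarrow> l \<in> ball 0 1 \<Longrightarrow> k l l = 0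
   \<Longrightarrow> m \<in> ball 0 1 \<Longrightarrow> k l m = 0"
proof -
  assume hs: "fun_hilbert_space H ip" and rk: "is_repr_kernel H ip k" and l: "l \<in> ball 0 1"
    and z: "k l l = 0" and m: "m \<in> ball 0 1"
  have "ip (Kf k l) (Kf k l) = 0" using k_ip[OF rk l l] z by simp
  then have "Kf k l = (\<lambda>z. 0)" using hs kern_in[OF rk l] unfolding fun_hilbert_space_def by blast
  then have "Kf k l m = 0" by simp
  then show "k l m = 0" using m unfolding Kf_def by simp
qed

definition pickhyp :: "((complex,'d::{finite,linorder}) vec \<Rightarrow> (complex,'d) vec \<Rightarrow> complex) \<Rightarrow> bool" where
  "pickhyp k \<longleftrightarrow> (\<forall>l1\<in>ball 0 1. \<forall>l2\<in>ball 0 1. l1 \<noteq> l2 \<longrightarrow> (\<forall>z1 z2 :: complex.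
       (\<exists>\<phi>. holo_on (ball 0 1) \<phi> \<and> (\<forall>z\<in>ball 0 1. cmod (\<phi> z) \<le> 1) \<and> \<phi> l1 = z1 \<and> \<phi> l2 = z2)
       \<longleftrightarrow> block_psd 2 1 (\<lambda>i j p q.
              (1 - (if j = 0 then z1 else z2) * cnj (if i = 0 then z1 else z2)) *
              k (if i = 0 then l1 else l2) (if j = 0 then l1 else l2))))"

lemma pick_iff:
  assumes "pickhyp k" "l1 \<in> ball 0 1" "l2 \<in> ball 0 1" "l1 \<noteq> l2"
  shows "(\<exists>\<phi>. holo_on (ball 0 1) \<phi> \<and> (\<forall>z\<in>ball 0 1. cmod (\<phi> z) \<le> 1) \<and> \<phi> l1 = z1 \<and> \<phi> l2 = z2)
    \<longleftrightarrow> (\<forall>x y. psdq ((1 - z1 * cnj z1) * k l1 l1 * x * cnj x + (1 - z2 * cnj z1) * k l1 l2 * x * cnj y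
               + (1 - z1 * cnj z2) * k l2 l1 * y * cnj x + (1 - z2 * cnj z2) * k l2 l2 * y * cnj y))"
  using assms unfolding pickhyp_def psd2_iff by simp

lemma k_pos:
  assumes hs: "fun_hilbert_space H ip" and rk: "is_repr_kernel H ip k" and pk: "pickhyp k"
    and l: "l \<in> ball 0 1"
  shows "Re (k l l) > 0"
proof (rule ccontr)
  assume "\<not> ?thesis"
  then have z: "k l l = 0" using k_diag[OF hs rk l] by (metis complex_of_real_def less_eq_real_def zero_complex.code)
  obtain l' where l': "norm l' < 1" "l' \<noteq> l" using exists_other_point[of l] l by auto
  have l'b: "l' \<in> ball 0 1" using l' by simp
  have z1: "k l l' = 0" by (rule k_zero[OF hs rk l z l'b])
  have z2: "k l' l = 0" using k_herm[OF hs rk l'b l] z1 by simp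
  obtain r where r: "k l' l' = of_real r" "r \<ge> 0" using k_diag[OF hs rk l'b] by blast
  have "\<forall>x y. psdq ((1 - 2 * cnj 2) * k l l * x * cnj x + (1 - 0 * cnj 2) * k l l' * x * cnj y
               + (1 - 2 * cnj 0) * k l' l * y * cnj x + (1 - 0 * cnj 0) * k l' l' * y * cnj y)"
  proof (intro allI)
    fix x y :: complex
    have "(1 - 2 * cnj 2) * k l l * x * cnj x + (1 - 0 * cnj 2) * k l l' * x * cnj y
               + (1 - 2 * cnj 0) * k l' l * y * cnj x + (1 - 0 * cnj 0) * k l' l' * y * cnj y
          = of_real (r * (cmod y)^2)"
      using z z1 z2 r by (simp add: cmod_sq2)
    then show "psdq ((1 - 2 * cnj 2) * k l l * x * cnj x + (1 - 0 * cnj 2) * k l l' * x * cnj y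
               + (1 - 2 * cnj 0) * k l' l * y * cnj x + (1 - 0 * cnj 0) * k l' l' * y * cnj y)"
      unfolding psdq_def using r by simp
  qed
  then obtain \<phi> where \<phi>: "(\<forall>z\<in>ball 0 1. cmod (\<phi> z) \<le> 1)" "\<phi> l = 2"
    using pick_iff[OF pk l l'b l'(2)[symmetric], of 2 0] by blast
  then show False using l by force
qed

lemma k_ident:
  assumes hs: "fun_hilbert_space H ip" and rk: "is_repr_kernel H ip k" and pk: "pickhyp k"
    and l1: "l1 \<in> ball 0 1" and l2: "l2 \<in> ball 0 1" and ne: "l1 \<noteq> l2"
  shows "(cmod (k l1 l2))^2 = Re (k l1 l1) * Re (k l2 l2) * (1 - (pd l1 l2)^2)"
proof -
  define a1 where "a1 = Re (k l1 l1)"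
  define a2 where "a2 = Re (k l2 l2)"
  define c where "c = k l1 l2"
  define d where "d = pd l1 l2"
  have a10: "a1 > 0" unfolding a1_def by (rule k_pos[OF hs rk pk l1])
  have a20: "a2 > 0" unfolding a2_def by (rule k_pos[OF hs rk pk l2])
  have k11: "k l1 l1 = of_real a1" unfolding a1_def using k_diag[OF hs rk l1] by simp
  have k22: "k l2 l2 = of_real a2" unfolding a2_def using k_diag[OF hs rk l2] by simp
  have k21: "k l2 l1 = cnj c" unfolding c_def using k_herm[OF hs rk l2 l1] .
  have n1: "norm l1 < 1" and n2: "norm l2 < 1" using l1 l2 by auto
  have d0: "d \<ge> 0" unfolding d_def pd_def by simp
  have cc: "c * cnj c = of_real ((cmod c)^2)" by (rule complex_norm_square[symmetric])
  have cm: "complex_of_real (cmod c) * complex_of_real (cmod c) = c * cnj c"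
    using cmod_sq2[of c] by (simp add: power2_eq_square)
  have up: "(cmod c)^2 \<le> (1 - d^2) * a1 * a2"
  proof -
    obtain \<phi> where "holo_on (ball 0 1) \<phi> \<and> (\<forall>z\<in>ball 0 1. cmod (\<phi> z) \<le> 1) \<and> \<phi> l1 = 0 \<and> \<phi> l2 = of_real d"
      using schur_exists[OF n1 n2 ne] unfolding d_def by blast
    then have P: "\<forall>x y. psdq ((1 - 0 * cnj 0) * k l1 l1 * x * cnj x + (1 - of_real d * cnj 0) * k l1 l2 * x * cnj y
               + (1 - 0 * cnj (of_real d)) * k l2 l1 * y * cnj x + (1 - of_real d * cnj (of_real d)) * k l2 l2 * y * cnj y)"
      using pick_iff[OF pk l1 l2 ne, of 0 "of_real d"] by blast
    have "(1 - 0 * cnj 0) * k l1 l1 * (- cnj c) * cnj (- cnj c) + (1 - of_real d * cnj 0) * k l1 l2 * (- cnj c) * cnj (of_real a1)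
               + (1 - 0 * cnj (of_real d)) * k l2 l1 * (of_real a1) * cnj (- cnj c) + (1 - of_real d * cnj (of_real d)) * k l2 l2 * (of_real a1) * cnj (of_real a1)
          = of_real a1 * (of_real ((1 - d^2) * a1 * a2) - c * cnj c)"
      unfolding k11 k22 k21 c_def[symmetric]
      by (simp add: algebra_simps power2_eq_square)
    also have "\<dots> = of_real (a1 * ((1 - d^2) * a1 * a2 - (cmod c)^2))"
      unfolding cc by simp
    finally have "(1 - 0 * cnj 0) * k l1 l1 * (- cnj c) * cnj (- cnj c) + (1 - of_real d * cnj 0) * k l1 l2 * (- cnj c) * cnj (of_real a1)
               + (1 - 0 * cnj (of_real d)) * k l2 l1 * (of_real a1) * cnj (- cnj c) + (1 - of_real d * cnj (of_real d)) * k l2 l2 * (of_real a1) * cnj (of_real a1)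
          = of_real (a1 * ((1 - d^2) * a1 * a2 - (cmod c)^2))" .
    then have "Re (complex_of_real (a1 * ((1 - d^2) * a1 * a2 - (cmod c)^2))) \<ge> 0"
      using P[rule_format, of "- cnj c" "of_real a1"] unfolding psdq_def by metis
    then have "a1 * ((1 - d^2) * a1 * a2 - (cmod c)^2) \<ge> 0" by simp
    then show ?thesis using a10 by (simp add: zero_le_mult_iff)
  qed
  have a12: "a1 * a2 > 0" using a10 a20 by simp
  define \<tau> where "\<tau> = sqrt (1 - (cmod c)^2 / (a1 * a2))"
  have rad: "(cmod c)^2 / (a1 * a2) \<le> 1"
  proof -
    have "(1 - d^2) * a1 * a2 = a1 * a2 - d^2 * (a1 * a2)" by (simp add: algebra_simps)
    moreover have "d^2 * (a1 * a2) \<ge> 0" using a12 by simp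
    ultimately have "(cmod c)^2 \<le> a1 * a2" using up by linarith
    then show ?thesis using a12 by simp
  qed
  have t2: "\<tau>^2 = 1 - (cmod c)^2 / (a1 * a2)" unfolding \<tau>_def using rad by simp
  have low: "\<tau> \<le> d"
  proof -
    have P: "\<forall>x y. psdq ((1 - 0 * cnj 0) * k l1 l1 * x * cnj x + (1 - of_real \<tau> * cnj 0) * k l1 l2 * x * cnj y
               + (1 - 0 * cnj (of_real \<tau>)) * k l2 l1 * y * cnj x + (1 - of_real \<tau> * cnj (of_real \<tau>)) * k l2 l2 * y * cnj y)"
    proof (intro allI)
      fix x y :: complex
      have e: "complex_of_real ((1 - \<tau>^2) * a2) = of_real ((cmod c)^2) / of_real a1"
        using a10 a20 unfolding t2 by (simp add: field_simps)
      have "(1 - 0 * cnj 0) * k l1 l1 * x * cnj x + (1 - of_real \<tau> * cnj 0) * k l1 l2 * x * cnj y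
               + (1 - 0 * cnj (of_real \<tau>)) * k l2 l1 * y * cnj x + (1 - of_real \<tau> * cnj (of_real \<tau>)) * k l2 l2 * y * cnj y
           = of_real a1 * x * cnj x + c * x * cnj y + cnj c * y * cnj x + of_real ((1 - \<tau>^2) * a2) * y * cnj y"
        unfolding k11 k22 k21 c_def[symmetric] by (simp add: algebra_simps power2_eq_square)
      also have "\<dots> = (of_real a1 * x + cnj c * y) * cnj (of_real a1 * x + cnj c * y) / of_real a1"
        unfolding e cc[symmetric] using a10 by (simp add: field_simps)
      also have "\<dots> = of_real ((cmod (of_real a1 * x + cnj c * y))^2 / a1)"
        by (simp only: of_real_divide complex_norm_square)
      finally show "psdq ((1 - 0 * cnj 0) * k l1 l1 * x * cnj x + (1 - of_real \<tau> * cnj 0) * k l1 l2 * x * cnj y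
               + (1 - 0 * cnj (of_real \<tau>)) * k l2 l1 * y * cnj x + (1 - of_real \<tau> * cnj (of_real \<tau>)) * k l2 l2 * y * cnj y)"
        unfolding psdq_def using a10 by simp
    qed
    obtain \<phi> where \<phi>: "holo_on (ball 0 1) \<phi>" "\<forall>z\<in>ball 0 1. cmod (\<phi> z) \<le> 1" "\<phi> l1 = 0" "\<phi> l2 = of_real \<tau>"
      using pick_iff[OF pk l1 l2 ne, of 0 "of_real \<tau>"] P by blast
    have "cmod (\<phi> l2) \<le> pd l1 l2" by (rule ball_schwarz_pick[OF \<phi>(1,2) n1 n2 ne \<phi>(3)])
    then show ?thesis using \<phi>(4) unfolding d_def \<tau>_def by simp
  qed
  have "\<tau>^2 \<le> d^2" using low by (rule power_mono) (simp add: \<tau>_def rad)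
  then have "1 - (cmod c)^2 / (a1 * a2) \<le> d^2" using t2 by simp
  then have "1 - d^2 \<le> (cmod c)^2 / (a1 * a2)" by simp
  then have "(1 - d^2) * (a1 * a2) \<le> (cmod c)^2 / (a1 * a2) * (a1 * a2)" using a12 by (intro mult_right_mono) auto
  moreover have "\<And>x P::real. P \<noteq> 0 \<Longrightarrow> x / P * P = x" by simp
  ultimately have "(1 - d^2) * (a1 * a2) \<le> (cmod c)^2" using a12 by (metis less_irrefl)
  with up show ?thesis unfolding a1_def[symmetric] a2_def[symmetric] c_def[symmetric] d_def[symmetric]
    by (simp add: mult.assoc)
qed

lemma k_ident_all:
  assumes hs: "fun_hilbert_space H ip" and rk: "is_repr_kernel H ip k" and pk: "pickhyp k"
    and l: "l \<in> ball 0 1" and m: "m \<in> ball 0 1"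
  shows "(cmod (k l m))^2 * (cmod (1 - cinner m l))^2 = Re (k l l) * Re (k m m) * ((1 - (norm l)^2) * (1 - (norm m)^2))"
proof (cases "l = m")
  case True
  have kl: "k l l = of_real (Re (k l l))" using k_diag[OF hs rk l] by simp
  have e: "1 - cinner l l = of_real (1 - (norm l)^2)" by (simp add: cinner_self)
  have "(norm l)^2 < 1" using l by (simp add: abs_square_less_1)
  moreover have "cmod (1 - cinner l l) = \<bar>1 - (norm l)^2\<bar>" unfolding e by (rule norm_of_real)
  ultimately have "cmod (1 - cinner l l) = 1 - (norm l)^2" by simp
  moreover have "cmod (k l l) = Re (k l l)" using kl k_diag[OF hs rk l] by (metis abs_of_nonneg norm_of_real)
  ultimately show ?thesis using True by (simp add: power2_eq_square)
next
  case False
  have n: "norm l < 1" "norm m < 1" using l m by auto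
  have D: "cmod (1 - cinner m l) > 0" using one_minus_cinner_nz[OF n(2) n(1)] by simp
  have "(cmod (k l m))^2 = Re (k l l) * Re (k m m) * (1 - (pd l m)^2)"
    by (rule k_ident[OF hs rk pk l m False])
  also have "1 - (pd l m)^2 = (1 - (norm l)^2) * (1 - (norm m)^2) / (cmod (1 - cinner m l))^2"
    unfolding pd_sq[OF n] by simp
  finally show ?thesis using D by (simp add: field_simps)
qed

lemma part1:
  assumes hs: "fun_hilbert_space H ip" and rk: "is_repr_kernel H ip k" and pk: "pickhyp k"
  shows "\<exists>f. holo_on (ball 0 1) f \<and> (\<forall>z\<in>ball 0 1. f z \<noteq> 0) \<and>
            (\<forall>lam\<in>ball 0 1. \<forall>mu\<in>ball 0 1. k lam mu = cnj (f lam) * f mu / (1 - cinner mu lam))"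
proof -
  define kr where "kr l = Re (k l l)" for l
  have krp: "kr l > 0" if "l \<in> ball 0 1" for l unfolding kr_def by (rule k_pos[OF hs rk pk that])
  have kl: "k l l = of_real (kr l)" if "l \<in> ball 0 1" for l unfolding kr_def using k_diag[OF hs rk that] by simp
  have holK: "holo_on (ball 0 1) (Kf k l)" if "l \<in> ball 0 1" for l
    using hs kern_in[OF rk that] unfolding fun_hilbert_space_def by blast
  have b0: "(0::(complex,'a) vec) \<in> ball 0 1" by simp
  define s0 where "s0 = sqrt (kr 0)"
  have s0p: "s0 > 0" unfolding s0_def using krp[OF b0] by simp
  define f where "f \<mu> = Kf k 0 \<mu> / of_real s0" for \<mu>
  have holf: "holo_on (ball 0 1) f"
    using holK[OF b0] s0p unfolding holo_on_cdiff f_def by (auto intro: cdiff_divide cdiff_const)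
  have fmod: "(cmod (f \<mu>))^2 = kr \<mu> * (1 - (norm \<mu>)^2)" if mu: "\<mu> \<in> ball 0 1" for \<mu>
  proof -
    have "(cmod (k 0 \<mu>))^2 * (cmod (1 - cinner \<mu> 0))^2 = kr 0 * kr \<mu> * ((1 - (norm (0::(complex,'a) vec))^2) * (1 - (norm \<mu>)^2))"
      unfolding kr_def by (rule k_ident_all[OF hs rk pk b0 mu])
    then have "(cmod (k 0 \<mu>))^2 = kr 0 * kr \<mu> * (1 - (norm \<mu>)^2)" by simp
    moreover have "(cmod (f \<mu>))^2 = (cmod (k 0 \<mu>))^2 / kr 0"
      unfolding f_def Kf_def using mu s0p unfolding s0_def by (simp add: norm_divide power_divide)
    ultimately show ?thesis using krp[OF b0] by simp
  qed
  have fnz: "f \<mu> \<noteq> 0" if mu: "\<mu> \<in> ball 0 1" for \<mu>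
  proof -
    have "(norm \<mu>)^2 < 1" using mu by (simp add: abs_square_less_1)
    then have "(cmod (f \<mu>))^2 > 0" using fmod[OF mu] krp[OF mu] by simp
    then show ?thesis by auto
  qed
  have main: "k lam mu = cnj (f lam) * f mu / (1 - cinner mu lam)" if lam: "lam \<in> ball 0 1" and mu: "mu \<in> ball 0 1" for lam mu
  proof -
    define h where "h \<mu> = (Kf k lam \<mu> * (1 - cinner \<mu> lam)) / (cnj (f lam) * f \<mu>)" for \<mu>
    have holh: "holo_on (ball 0 1) h"
      unfolding holo_on_cdiff h_def
    proof
      fix z assume z: "z \<in> ball (0::(complex,'a) vec) 1"
      have "cdiff z (Kf k lam)" using holK[OF lam] z unfolding holo_on_cdiff by blast
      moreover have "cdiff z f" using holf z unfolding holo_on_cdiff by blast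
      moreover have "cnj (f lam) * f z \<noteq> 0" using fnz[OF lam] fnz[OF z] by simp
      ultimately show "cdiff z (\<lambda>\<mu>. Kf k lam \<mu> * (1 - cinner \<mu> lam) / (cnj (f lam) * f \<mu>))"
        by (intro cdiff_divide cdiff_mult cdiff_diff cdiff_const cdiff_cinner)
    qed
    have hmod: "cmod (h \<mu>) = 1" if mu': "\<mu> \<in> ball 0 1" for \<mu>
    proof -
      have "(cmod (h \<mu>))^2 = (cmod (k lam \<mu>))^2 * (cmod (1 - cinner \<mu> lam))^2 / ((cmod (f lam))^2 * (cmod (f \<mu>))^2)"
        unfolding h_def Kf_def using mu' by (simp add: norm_mult norm_divide power_divide power_mult_distrib)
      also have "\<dots> = 1"
      proof -
        define A where "A = kr lam * (1 - (norm lam)^2)"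
        define B where "B = kr \<mu> * (1 - (norm \<mu>)^2)"
        have "(norm lam)^2 < 1" "(norm \<mu>)^2 < 1" using lam mu' by (simp_all add: abs_square_less_1)
        then have AB: "A * B \<noteq> 0" unfolding A_def B_def using krp[OF lam] krp[OF mu'] by simp
        have "(cmod (k lam \<mu>))^2 * (cmod (1 - cinner \<mu> lam))^2 = A * B"
          unfolding k_ident_all[OF hs rk pk lam mu'] kr_def[symmetric] A_def B_def by (simp add: algebra_simps)
        moreover have "(cmod (f lam))^2 * (cmod (f \<mu>))^2 = A * B" unfolding fmod[OF lam] fmod[OF mu'] A_def B_def ..
        ultimately show ?thesis using AB by simp
      qed
      finally show ?thesis by (metis norm_ge_zero power2_eq_1_iff neg_equal_zero one_neq_zero less_le_not_le neg_0_le_iff_le zero_less_one not_one_le_zero)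
    qed
    obtain c where c: "\<forall>z\<in>ball 0 1. h z = c" using const_modulus_const[OF holh] hmod by blast
    have hl: "h lam = 1"
    proof -
      have "cnj (f lam) * f lam = of_real ((cmod (f lam))^2)" by (metis complex_norm_square mult.commute)
      also have "\<dots> = of_real (kr lam * (1 - (norm lam)^2))" using fmod[OF lam] by simp
      also have "\<dots> = k lam lam * (1 - cinner lam lam)" using kl[OF lam] by (simp add: cinner_self)
      finally have e: "cnj (f lam) * f lam = k lam lam * (1 - cinner lam lam)" .
      have "cnj (f lam) * f lam \<noteq> 0" using fnz[OF lam] by simp
      then show ?thesis unfolding h_def Kf_def using lam e by simp
    qed
    have "h mu = 1" using c hl lam mu by metis
    then have "k lam mu * (1 - cinner mu lam) = cnj (f lam) * f mu"
      unfolding h_def Kf_def using mu fnz[OF lam] fnz[OF mu] by (simp add: divide_eq_1_iff)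
    moreover have "1 - cinner mu lam \<noteq> 0" using one_minus_cinner_nz[of mu lam] lam mu by simp
    ultimately show ?thesis by (simp add: field_simps)
  qed
  show ?thesis using holf fnz main by blast
qed

lemma block_psd_rescale:
  assumes A: "\<And>i j p q. i < n \<Longrightarrow> j < n \<Longrightarrow> A i j p q = cnj (g i) * g j * A' i j p q"
    and g: "\<And>i. i < n \<Longrightarrow> g i \<noteq> 0"
  shows "block_psd n m A \<longleftrightarrow> block_psd n m A'"
proof -
  have S: "(\<Sum>i<n. \<Sum>j<n. \<Sum>p<m. \<Sum>q<m. A i j p q * a i q * cnj (a j p)) =
           (\<Sum>i<n. \<Sum>j<n. \<Sum>p<m. \<Sum>q<m. A' i j p q * (cnj (g i) * a i q) * cnj (cnj (g j) * a j p))" for a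
    by (intro sum.cong refl) (simp add: A mult_ac)
  show ?thesis
  proof
    assume L: "block_psd n m A"
    show "block_psd n m A'"
      unfolding block_psd_def
    proof
      fix a' :: "nat \<Rightarrow> nat \<Rightarrow> complex"
      define a where "a i q = a' i q / cnj (g i)" for i q
      have e: "(\<Sum>i<n. \<Sum>j<n. \<Sum>p<m. \<Sum>q<m. A' i j p q * a' i q * cnj (a' j p)) =
           (\<Sum>i<n. \<Sum>j<n. \<Sum>p<m. \<Sum>q<m. A' i j p q * (cnj (g i) * a i q) * cnj (cnj (g j) * a j p))"
        by (intro sum.cong refl) (simp add: a_def g)
      show "let s = \<Sum>i<n. \<Sum>j<n. \<Sum>p<m. \<Sum>q<m. A' i j p q * a' i q * cnj (a' j p) in Im s = 0 \<and> 0 \<le> Re s"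
        using L unfolding block_psd_def e S[symmetric] by blast
    qed
  next
    assume R: "block_psd n m A'"
    show "block_psd n m A"
      unfolding block_psd_def
    proof
      fix a :: "nat \<Rightarrow> nat \<Rightarrow> complex"
      show "let s = \<Sum>i<n. \<Sum>j<n. \<Sum>p<m. \<Sum>q<m. A i j p q * a i q * cnj (a j p) in Im s = 0 \<and> 0 \<le> Re s"
        unfolding S using R[unfolded block_psd_def, rule_format, of "\<lambda>i q. cnj (g i) * a i q"] by simp
    qed
  qed
qed

lemma part3:
  assumes fnz: "\<forall>z\<in>ball 0 1. f z \<noteq> 0"
    and kf: "\<forall>lam\<in>ball 0 1. \<forall>mu\<in>ball 0 1. k lam mu = cnj (f lam) * f mu / (1 - cinner mu lam)"
  shows "\<forall>(m::nat) (n::nat) (lam :: nat \<Rightarrow> (complex, 'd::{finite,linorder}) vec) (Z :: nat \<Rightarrow> nat \<Rightarrow> nat \<Rightarrow> complex).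
            (\<forall>i<n. lam i \<in> ball 0 1) \<longrightarrow>
            (block_psd n m (\<lambda>i j p q. ((if p = q then 1 else 0) - (\<Sum>r<m. Z j p r * cnj (Z i q r)))
                                      * k (lam i) (lam j))
             \<longleftrightarrow> block_psd n m (\<lambda>i j p q. ((if p = q then 1 else 0) - (\<Sum>r<m. Z j p r * cnj (Z i q r)))
                                      / (1 - cinner (lam j) (lam i))))"
proof (intro allI impI)
  fix m n :: nat and lam :: "nat \<Rightarrow> (complex, 'd) vec" and Z :: "nat \<Rightarrow> nat \<Rightarrow> nat \<Rightarrow> complex"
  assume lb: "\<forall>i<n. lam i \<in> ball 0 1"
  show "block_psd n m (\<lambda>i j p q. ((if p = q then 1 else 0) - (\<Sum>r<m. Z j p r * cnj (Z i q r))) * k (lam i) (lam j))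
     \<longleftrightarrow> block_psd n m (\<lambda>i j p q. ((if p = q then 1 else 0) - (\<Sum>r<m. Z j p r * cnj (Z i q r))) / (1 - cinner (lam j) (lam i)))"
  proof (rule block_psd_rescale[where g = "\<lambda>i. f (lam i)"])
    fix i j p q assume i: "i < n" and j: "j < n"
    show "((if p = q then 1 else 0) - (\<Sum>r<m. Z j p r * cnj (Z i q r))) * k (lam i) (lam j) =
          cnj (f (lam i)) * f (lam j) * (((if p = q then 1 else 0) - (\<Sum>r<m. Z j p r * cnj (Z i q r))) / (1 - cinner (lam j) (lam i)))"
      using kf lb i j by simp
  next
    fix i assume "i < n"
    then show "f (lam i) \<noteq> 0" using fnz lb by blast
  qed
qed

lemma part2:
  fixes H :: "('d::{finite,linorder}) hfun set"
  assumes hs: "fun_hilbert_space H ip" and rk: "is_repr_kernel H ip k"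
    and holf: "holo_on (ball 0 1) f" and fnz: "\<forall>z\<in>ball 0 1. f z \<noteq> 0"
    and kf: "\<forall>lam\<in>ball 0 1. \<forall>mu\<in>ball 0 1. k lam mu = cnj (f lam) * f mu / (1 - cinner mu lam)"
  shows "\<exists>H' ip'. fun_hilbert_space H' ip' \<and>
            is_repr_kernel H' ip' (\<lambda>lam mu. 1 / (1 - cinner mu lam)) \<and>
            unitarily_equiv_mult H ip H' ip'"
proof -
  define gi where "gi \<mu> = (if \<mu> \<in> ball 0 1 then 1 / f \<mu> else 0)" for \<mu>
  define U where "U h = (\<lambda>z. h z * gi z)" for h :: "'d hfun"
  define V where "V a = (\<lambda>z. a z * f z)" for a :: "'d hfun"
  define H' where "H' = U ` H"
  define ip' where "ip' a b = ip (V a) (V b)" for a b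
  note hs' = hs[unfolded fun_hilbert_space_def]
  have HV: "\<forall>f\<in>H. holo_on (ball 0 1) f \<and> (\<forall>z. z \<notin> ball 0 1 \<longrightarrow> f z = 0)" using hs' by (rule conjunct1)
  have Hvan: "\<forall>h\<in>H. \<forall>z. z \<notin> ball 0 1 \<longrightarrow> h z = 0" using HV by simp
  have Hhol: "\<forall>h\<in>H. holo_on (ball 0 1) h" using HV by simp
  note hs2 = hs'[THEN conjunct2]
  have H0: "(\<lambda>z. 0) \<in> H" using hs2 by (rule conjunct1)
  note hs3 = hs2[THEN conjunct2]
  have Hadd: "\<forall>f\<in>H. \<forall>g\<in>H. (\<lambda>z. f z + g z) \<in> H" using hs3 by (rule conjunct1)
  note hs4 = hs3[THEN conjunct2]
  have Hsc: "\<forall>c. \<forall>f\<in>H. (\<lambda>z. c * f z) \<in> H" using hs4 by (rule conjunct1)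
  note hs5 = hs4[THEN conjunct2]
  have ipadd: "\<forall>f\<in>H. \<forall>g\<in>H. \<forall>h\<in>H. ip (\<lambda>z. f z + g z) h = ip f h + ip g h" using hs5 by (rule conjunct1)
  note hs6 = hs5[THEN conjunct2]
  have ipsc: "\<forall>c. \<forall>f\<in>H. \<forall>g\<in>H. ip (\<lambda>z. c * f z) g = c * ip f g" using hs6 by (rule conjunct1)
  note hs7 = hs6[THEN conjunct2]
  have ipcs: "\<forall>f\<in>H. \<forall>g\<in>H. ip g f = cnj (ip f g)" using hs7 by (rule conjunct1)
  note hs8 = hs7[THEN conjunct2]
  have ippos: "\<forall>f\<in>H. Im (ip f f) = 0 \<and> Re (ip f f) \<ge> 0" using hs8 by (rule conjunct1)
  note hs9 = hs8[THEN conjunct2]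
  have ipdef: "\<forall>f\<in>H. ip f f = 0 \<longrightarrow> f = (\<lambda>z. 0)" using hs9 by (rule conjunct1)
  have Hcomp: "\<forall>s :: nat \<Rightarrow> _. (\<forall>n. s n \<in> H) \<longrightarrow>
        (\<forall>e>0. \<exists>N. \<forall>m\<ge>N. \<forall>n\<ge>N. hnorm ip (\<lambda>z. s m z - s n z) < e) \<longrightarrow>
        (\<exists>g\<in>H. \<forall>e>0. \<exists>N. \<forall>n\<ge>N. hnorm ip (\<lambda>z. s n z - g z) < e)"
    using hs9 by (rule conjunct2)
  have VU: "V (U h) = h" if "h \<in> H" for h
  proof
    fix z show "V (U h) z = h z"
      using Hvan that fnz unfolding V_def U_def gi_def by (cases "z \<in> ball 0 1") auto
  qed
  have UV: "U (V a) = a" if "a \<in> H'" for a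
    using that VU unfolding H'_def by auto
  have VH: "V a \<in> H" if "a \<in> H'" for a
    using that VU unfolding H'_def by auto
  have UH: "U h \<in> H'" if "h \<in> H" for h using that unfolding H'_def by auto
  have Vadd: "V (\<lambda>z. a z + b z) = (\<lambda>z. V a z + V b z)" for a b unfolding V_def by (simp add: distrib_right)
  have Vdiff: "V (\<lambda>z. a z - b z) = (\<lambda>z. V a z - V b z)" for a b unfolding V_def by (simp add: left_diff_distrib)
  have Vsc: "V (\<lambda>z. c * a z) = (\<lambda>z. c * V a z)" for a c unfolding V_def by (simp add: mult.assoc)
  have Uadd: "U (\<lambda>z. a z + b z) = (\<lambda>z. U a z + U b z)" for a b unfolding U_def by (simp add: distrib_right)
  have Usc: "U (\<lambda>z. c * a z) = (\<lambda>z. c * U a z)" for a c unfolding U_def by (simp add: mult.assoc)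
  have ipconj: "ip a (\<lambda>z. c * b z) = cnj c * ip a b" if "a \<in> H" "b \<in> H" for a b c
  proof -
    have cb: "(\<lambda>z. c * b z) \<in> H" using Hsc that(2) by blast
    have e1: "ip a (\<lambda>z. c * b z) = cnj (ip (\<lambda>z. c * b z) a)" using ipcs[rule_format, OF cb that(1)] .
    have e2: "ip (\<lambda>z. c * b z) a = c * ip b a" using ipsc[rule_format, OF that(2) that(1)] .
    have e3: "ip b a = cnj (ip a b)" using ipcs[rule_format, OF that(1) that(2)] .
    show ?thesis unfolding e1 e2 e3 by simp
  qed
  have cdgi: "cdiff z gi" if z: "z \<in> ball 0 1" for z
  proof -
    have "cdiff z f" using holf z unfolding holo_on_cdiff by blast
    then have "cdiff z (\<lambda>x. inverse (f x))" using fnz z by (intro cdiff_inverse) auto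
    then show ?thesis by (rule cdiff_transform[OF _ open_ball z]) (simp add: gi_def divide_inverse)
  qed
  have FH: "fun_hilbert_space H' ip'"
    unfolding fun_hilbert_space_def
  proof (intro conjI)
    show "\<forall>a\<in>H'. holo_on (ball 0 1) a \<and> (\<forall>z. z \<notin> ball 0 1 \<longrightarrow> a z = 0)"
    proof
      fix a assume "a \<in> H'"
      then obtain h where h: "h \<in> H" "a = U h" unfolding H'_def by auto
      have "holo_on (ball 0 1) a" unfolding holo_on_cdiff
      proof
        fix z :: "(complex,'d) vec" assume z: "z \<in> ball 0 1"
        have "holo_on (ball 0 1) h" using Hhol h(1) by blast
        then have "cdiff z h" using z unfolding holo_on_cdiff by blast
        then show "cdiff z a" unfolding h(2) U_def by (rule cdiff_mult[OF _ cdgi[OF z]])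
      qed
      moreover have "\<forall>z. z \<notin> ball 0 1 \<longrightarrow> a z = 0" unfolding h(2) U_def gi_def by simp
      ultimately show "holo_on (ball 0 1) a \<and> (\<forall>z. z \<notin> ball 0 1 \<longrightarrow> a z = 0)" ..
    qed
    show "(\<lambda>z. 0) \<in> H'"
    proof -
      have "U (\<lambda>z. 0) = (\<lambda>z. 0)" unfolding U_def by simp
      then show ?thesis using UH[OF H0] by simp
    qed
    show "\<forall>a\<in>H'. \<forall>b\<in>H'. (\<lambda>z. a z + b z) \<in> H'"
    proof (intro ballI)
      fix a b assume a: "a \<in> H'" and b: "b \<in> H'"
      have "(\<lambda>z. a z + b z) = U (\<lambda>z. V a z + V b z)" unfolding Uadd UV[OF a] UV[OF b] ..
      then show "(\<lambda>z. a z + b z) \<in> H'" using UH Hadd VH a b by simp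
    qed
    show "\<forall>c. \<forall>a\<in>H'. (\<lambda>z. c * a z) \<in> H'"
    proof (intro allI ballI)
      fix c a assume a: "a \<in> H'"
      have "(\<lambda>z. c * a z) = U (\<lambda>z. c * V a z)" unfolding Usc UV[OF a] ..
      then show "(\<lambda>z. c * a z) \<in> H'" using UH Hsc VH a by simp
    qed
    show "\<forall>a\<in>H'. \<forall>b\<in>H'. \<forall>h\<in>H'. ip' (\<lambda>z. a z + b z) h = ip' a h + ip' b h"
      unfolding ip'_def Vadd
    proof (intro ballI)
      fix a b h assume "a \<in> H'" "b \<in> H'" "h \<in> H'"
      then show "ip (\<lambda>z. V a z + V b z) (V h) = ip (V a) (V h) + ip (V b) (V h)"
        using ipadd[rule_format, OF VH VH VH] by simp
    qed
    show "\<forall>c. \<forall>a\<in>H'. \<forall>b\<in>H'. ip' (\<lambda>z. c * a z) b = c * ip' a b"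
      unfolding ip'_def Vsc
    proof (intro allI ballI)
      fix c a b assume "a \<in> H'" "b \<in> H'"
      then show "ip (\<lambda>z. c * V a z) (V b) = c * ip (V a) (V b)"
        using ipsc[rule_format, OF VH VH] by simp
    qed
    show "\<forall>a\<in>H'. \<forall>b\<in>H'. ip' b a = cnj (ip' a b)"
      unfolding ip'_def
    proof (intro ballI)
      fix a b assume "a \<in> H'" "b \<in> H'"
      then show "ip (V b) (V a) = cnj (ip (V a) (V b))"
        by (intro ipcs[rule_format, OF VH VH])
    qed
    show "\<forall>a\<in>H'. Im (ip' a a) = 0 \<and> Re (ip' a a) \<ge> 0"
      unfolding ip'_def
    proof
      fix a assume "a \<in> H'"
      then show "Im (ip (V a) (V a)) = 0 \<and> Re (ip (V a) (V a)) \<ge> 0" using ippos VH by blast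
    qed
    show "\<forall>a\<in>H'. ip' a a = 0 \<longrightarrow> a = (\<lambda>z. 0)"
    proof (intro ballI impI)
      fix a assume a: "a \<in> H'" and z: "ip' a a = 0"
      then have "V a = (\<lambda>z. 0)" using ipdef VH[OF a] unfolding ip'_def by blast
      then have "U (V a) = (\<lambda>z. 0)" unfolding U_def by simp
      then show "a = (\<lambda>z. 0)" using UV[OF a] by simp
    qed
    show "\<forall>s :: nat \<Rightarrow> _. (\<forall>n. s n \<in> H') \<longrightarrow>
        (\<forall>e>0. \<exists>N. \<forall>m\<ge>N. \<forall>n\<ge>N. hnorm ip' (\<lambda>z. s m z - s n z) < e) \<longrightarrow>
        (\<exists>g\<in>H'. \<forall>e>0. \<exists>N. \<forall>n\<ge>N. hnorm ip' (\<lambda>z. s n z - g z) < e)"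
    proof (intro allI impI)
      fix s :: "nat \<Rightarrow> 'd hfun"
      assume sH: "\<forall>n. s n \<in> H'" and C: "\<forall>e>0. \<exists>N. \<forall>m\<ge>N. \<forall>n\<ge>N. hnorm ip' (\<lambda>z. s m z - s n z) < e"
      have hn: "hnorm ip' (\<lambda>z. a z - b z) = hnorm ip (\<lambda>z. V a z - V b z)" for a b
        unfolding hnorm_def ip'_def Vdiff ..
      have "\<forall>n. V (s n) \<in> H" using sH VH by blast
      moreover have "\<forall>e>0. \<exists>N. \<forall>m\<ge>N. \<forall>n\<ge>N. hnorm ip (\<lambda>z. V (s m) z - V (s n) z) < e"
        using C unfolding hn .
      ultimately obtain g where g: "g \<in> H" and L: "\<forall>e>0. \<exists>N. \<forall>n\<ge>N. hnorm ip (\<lambda>z. V (s n) z - g z) < e"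
        using Hcomp[rule_format, of "\<lambda>n. V (s n)"] by blast
      have "\<forall>e>0. \<exists>N. \<forall>n\<ge>N. hnorm ip' (\<lambda>z. s n z - U g z) < e"
        unfolding hn VU[OF g] using L .
      then show "\<exists>g\<in>H'. \<forall>e>0. \<exists>N. \<forall>n\<ge>N. hnorm ip' (\<lambda>z. s n z - g z) < e"
        using UH[OF g] by blast
    qed
  qed
  have RK: "is_repr_kernel H' ip' (\<lambda>lam mu. 1 / (1 - cinner mu lam))"
    unfolding is_repr_kernel_def
  proof (rule ballI, rule conjI)
    fix lam :: "(complex,'d) vec" assume lam: "lam \<in> ball 0 1"
    define c where "c = 1 / cnj (f lam)"
    have flam: "f lam \<noteq> 0" using fnz lam by blast
    have KE: "(\<lambda>mu. if mu \<in> ball 0 1 then 1 / (1 - cinner mu lam) else 0) = U (\<lambda>z. c * Kf k lam z)"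
    proof
      fix mu
      show "(if mu \<in> ball 0 1 then 1 / (1 - cinner mu lam) else 0) = U (\<lambda>z. c * Kf k lam z) mu"
      proof (cases "mu \<in> ball 0 1")
        case True
        have "f mu \<noteq> 0" using fnz True by blast
        then show ?thesis using True kf lam flam unfolding U_def gi_def Kf_def c_def by simp
      qed (simp add: U_def gi_def)
    qed
    have cK: "(\<lambda>z. c * Kf k lam z) \<in> H" using Hsc kern_in[OF rk lam] by blast
    show "(\<lambda>mu. if mu \<in> ball 0 1 then 1 / (1 - cinner mu lam) else 0) \<in> H'"
      unfolding KE using UH[OF cK] .
    show "\<forall>a\<in>H'. ip' a (\<lambda>mu. if mu \<in> ball 0 1 then 1 / (1 - cinner mu lam) else 0) = a lam"
    proof
      fix a assume a: "a \<in> H'"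
      have "ip' a (\<lambda>mu. if mu \<in> ball 0 1 then 1 / (1 - cinner mu lam) else 0) = ip (V a) (\<lambda>z. c * Kf k lam z)"
        unfolding KE ip'_def VU[OF cK] ..
      also have "\<dots> = cnj c * ip (V a) (Kf k lam)" by (rule ipconj[OF VH[OF a] kern_in[OF rk lam]])
      also have "\<dots> = cnj c * V a lam" using kern_repr[OF rk lam VH[OF a]] by simp
      also have "\<dots> = a lam" unfolding c_def V_def using flam by simp
      finally show "ip' a (\<lambda>mu. if mu \<in> ball 0 1 then 1 / (1 - cinner mu lam) else 0) = a lam" .
    qed
  qed
  have UE: "unitarily_equiv_mult H ip H' ip'"
    unfolding unitarily_equiv_mult_def
  proof (intro exI conjI)
    have "inj_on U H"
    proof (rule inj_onI)
      fix x y assume "x \<in> H" "y \<in> H" "U x = U y"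
      then have "V (U x) = V (U y)" by simp
      then show "x = y" using VU[of x] VU[of y] \<open>x \<in> H\<close> \<open>y \<in> H\<close> by metis
    qed
    then show "bij_betw U H H'" unfolding bij_betw_def H'_def by simp
    show "\<forall>a\<in>H. \<forall>b\<in>H. ip' (U a) (U b) = ip a b" unfolding ip'_def
    proof (intro ballI)
      fix a b assume "a \<in> H" "b \<in> H"
      then show "ip (V (U a)) (V (U b)) = ip a b" using VU[of a] VU[of b] by simp
    qed
    show "\<forall>c. \<forall>a\<in>H. \<forall>b\<in>H. U (\<lambda>z. c * a z + b z) = (\<lambda>z. c * U a z + U b z)"
      unfolding U_def by (simp add: algebra_simps)
    show "\<forall>r. \<forall>a\<in>H. U (mult_op r a) = mult_op r (U a)"
      unfolding U_def mult_op_def by (simp add: mult.assoc)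
  qed
  show ?thesis using FH RK UE by blast
qed

theorem proposition4p6:
  fixes H :: "((complex, 'd::{finite,linorder}) vec \<Rightarrow> complex) set"
    and ip :: "((complex, 'd) vec \<Rightarrow> complex) \<Rightarrow> ((complex, 'd) vec \<Rightarrow> complex) \<Rightarrow> complex"
    and k :: "(complex, 'd) vec \<Rightarrow> (complex, 'd) vec \<Rightarrow> complex"
  assumes reg: "regular_space H ip k"
    and pick: "\<forall>l1\<in>ball 0 1. \<forall>l2\<in>ball 0 1. l1 \<noteq> l2 \<longrightarrow> (\<forall>z1 z2 :: complex.
       (\<exists>\<phi>. holo_on (ball 0 1) \<phi> \<and> (\<forall>z\<in>ball 0 1. cmod (\<phi> z) \<le> 1) \<and> \<phi> l1 = z1 \<and> \<phi> l2 = z2)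
       \<longleftrightarrow> block_psd 2 1 (\<lambda>i j p q.
              (1 - (if j = 0 then z1 else z2) * cnj (if i = 0 then z1 else z2)) *
              k (if i = 0 then l1 else l2) (if j = 0 then l1 else l2)))"
  shows "(\<exists>f. holo_on (ball 0 1) f \<and> (\<forall>z\<in>ball 0 1. f z \<noteq> 0) \<and>
            (\<forall>lam\<in>ball 0 1. \<forall>mu\<in>ball 0 1. k lam mu = cnj (f lam) * f mu / (1 - cinner mu lam)))
       \<and> (\<exists>H' ip'. fun_hilbert_space H' ip' \<and>
            is_repr_kernel H' ip' (\<lambda>lam mu. 1 / (1 - cinner mu lam)) \<and>
            unitarily_equiv_mult H ip H' ip')
       \<and> (\<forall>(m::nat) (n::nat) (lam :: nat \<Rightarrow> (complex, 'd) vec) (Z :: nat \<Rightarrow> nat \<Rightarrow> nat \<Rightarrow> complex).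
            (\<forall>i<n. lam i \<in> ball 0 1) \<longrightarrow>
            (block_psd n m (\<lambda>i j p q. ((if p = q then 1 else 0) - (\<Sum>r<m. Z j p r * cnj (Z i q r)))
                                      * k (lam i) (lam j))
             \<longleftrightarrow> block_psd n m (\<lambda>i j p q. ((if p = q then 1 else 0) - (\<Sum>r<m. Z j p r * cnj (Z i q r)))
                                      / (1 - cinner (lam j) (lam i)))))"
proof -
  have hs: "fun_hilbert_space H ip" and rk: "is_repr_kernel H ip k"
    using reg unfolding regular_space_def by blast+
  have pk: "pickhyp k" unfolding pickhyp_def using pick .
  obtain f where f: "holo_on (ball 0 1) f" "\<forall>z\<in>ball 0 1. f z \<noteq> 0"
      "\<forall>lam\<in>ball 0 1. \<forall>mu\<in>ball 0 1. k lam mu = cnj (f lam) * f mu / (1 - cinner mu lam)"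
    using part1[OF hs rk pk] by blast
  show ?thesis
    using part2[OF hs rk f(1) f(2) f(3)] part3[OF f(2) f(3)] f by blast
qed

end
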